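(* Let $N\ge1$ and, for $1\le m\le N$, let $a_m,b_m\in\mathbb{R}$ with $b_m\ne0$, and let $f_m:\mathbb{R}\to\mathbb{R}$ with $f_m\in L^2(\mathbb{R})$, where $f_m$ is not identically zero for some $1\le m\le N$. Then the system $$\Big[\frac12\ln\Big(-\frac{d^2}{dx^2}\Big)\Big]u_m-b_m\frac{du_m}{dx}-a_mu_m=f_m(x),\qquad x\in\mathbb{R},\ 1\le m\le N,$$ admits a unique solution $u_0=(u_{0,1},\dots,u_{0,N})^T\in L^2(\mathbb{R},\mathbb{R}^N)$.
   Context: Fourier transform: $\widehat{\phi}(p)=\frac{1}{\sqrt{2\pi}}\int_{\mathbb{R}}\phi(x)e^{-ipx}dx$. The logarithmic Laplacian $\ln(-\frac{d^2}{dx^2})$ is the operator with Fourier symbol $2\ln|p|$, so the operator on the left side of the $m$-th equation has Fourier symbol $\ln\big(\frac{|p|}{e^{a_m}}\big)-ib_mp$, and the $m$-th equation for $u_m\in L^2(\mathbb{R})$ means $\big(\ln\big(\frac{|p|}{e^{a_m}}\big)-ib_mp\big)\widehat{u_m}(p)=\widehat{f_m}(p)$ for a.e. $p\in\mathbb{R}$. $L^2(\mathbb{R},\mathbb{R}^N)$ carries the norm $\|u\|^2=\sum_{m=1}^N\|u_m\|_{L^2(\mathbb{R})}^2$. *)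

theory Defs
  imports "HOL-Analysis.Analysis"
begin

definition L2_real :: "(real \<Rightarrow> real) \<Rightarrow> bool" where
  "L2_real g \<longleftrightarrow> g \<in> borel_measurable lborel \<and> integrable lborel (\<lambda>x. (g x)\<^sup>2)"

definition L2_complex :: "(real \<Rightarrow> complex) \<Rightarrow> bool" where
  "L2_complex g \<longleftrightarrow> g \<in> borel_measurable lborel \<and> integrable lborel (\<lambda>x. (cmod (g x))\<^sup>2)"

definition fourier_trunc :: "(real \<Rightarrow> real) \<Rightarrow> real \<Rightarrow> real \<Rightarrow> complex" where
  "fourier_trunc \<phi> R p =
     complex_of_real (1 / sqrt (2 * pi)) *
     (LINT x:{-R..R}|lborel. complex_of_real (\<phi> x) * exp (- \<i> * complex_of_real (p * x)))"

definition has_L2_fourier :: "(real \<Rightarrow> real) \<Rightarrow> (real \<Rightarrow> complex) \<Rightarrow> bool" where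
  "has_L2_fourier \<phi> \<Phi> \<longleftrightarrow> L2_complex \<Phi> \<and>
     ((\<lambda>R. \<integral>\<^sup>+ p. ennreal ((cmod (\<Phi> p - fourier_trunc \<phi> R p))\<^sup>2) \<partial>lborel) \<longlongrightarrow> 0) at_top"

text \<open>Fourier symbol of (1/2) ln(-d^2/dx^2) - b d/dx - a.\<close>
definition symb :: "real \<Rightarrow> real \<Rightarrow> real \<Rightarrow> complex" where
  "symb a b p = complex_of_real (ln (\<bar>p\<bar> / exp a)) - \<i> * complex_of_real (b * p)"

definition solves_eq :: "real \<Rightarrow> real \<Rightarrow> (real \<Rightarrow> real) \<Rightarrow> (real \<Rightarrow> real) \<Rightarrow> bool" where
  "solves_eq a b f u \<longleftrightarrow> L2_real u \<and>
     (\<exists>U F. has_L2_fourier u U \<and> has_L2_fourier f F \<and>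
        (AE p in lborel. symb a b p * U p = F p))"

end

theory Submission
  imports Defs "HOL-Probability.Probability"
begin

lemma borel_measurable_cnj' [measurable (raw)]:
  fixes f :: "'a \<Rightarrow> complex"
  assumes "f \<in> borel_measurable M"
  shows "(\<lambda>x. cnj (f x)) \<in> borel_measurable M"
proof -
  have "cnj \<in> borel_measurable borel"
    by (rule borel_measurable_continuous_onI) (intro continuous_intros)
  from measurable_compose[OF assms this] show ?thesis by (simp add: o_def)
qed

lemma UQ_real:
  fixes r :: "real \<Rightarrow> real"
  assumes ri: "integrable lborel r"
    and z: "\<And>t. (CLINT x|lborel. complex_of_real (r x) * iexp (t*x)) = 0"
  shows "AE x in lborel. r x = 0"
proof -
  define p where "p x = max (r x) 0" for x
  define n where "n x = max (- r x) 0" for x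
  have pi: "integrable lborel p" unfolding p_def using ri by auto
  have ni: "integrable lborel n" unfolding n_def using ri by auto
  have rpn: "r x = p x - n x" for x unfolding p_def n_def by auto
  have pm[measurable]: "p \<in> borel_measurable borel" using pi by auto
  have nm[measurable]: "n \<in> borel_measurable borel" using ni by auto
  have pn0: "p x \<ge> 0" "n x \<ge> 0" for x unfolding p_def n_def by auto
  have ip: "integrable lborel (\<lambda>x. complex_of_real (p x) * iexp (t*x))" for t
    by (rule Bochner_Integration.integrable_bound[where f="\<lambda>x. complex_of_real (p x)"])
       (use pi in \<open>auto simp: norm_mult\<close>)
  have inn: "integrable lborel (\<lambda>x. complex_of_real (n x) * iexp (t*x))" for t
    by (rule Bochner_Integration.integrable_bound[where f="\<lambda>x. complex_of_real (n x)"])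
       (use ni in \<open>auto simp: norm_mult\<close>)
  have eqc: "(CLINT x|lborel. complex_of_real (p x) * iexp (t*x)) = (CLINT x|lborel. complex_of_real (n x) * iexp (t*x))" for t
  proof -
    have "(CLINT x|lborel. complex_of_real (p x) * iexp (t*x)) - (CLINT x|lborel. complex_of_real (n x) * iexp (t*x))
       = (CLINT x|lborel. complex_of_real (r x) * iexp (t*x))"
      by (subst Bochner_Integration.integral_diff[symmetric, OF ip inn])
         (rule Bochner_Integration.integral_cong, auto simp: rpn algebra_simps)
    then show ?thesis using z[of t] by simp
  qed
  define m where "m = integral\<^sup>L lborel p"
  have mn: "m = integral\<^sup>L lborel n"
    using eqc[of 0] unfolding m_def by simp
  have "AE x in lborel. p x = n x"
  proof (cases "m = 0")
    case True
    have "AE x in lborel. p x = 0" using True pi pn0 unfolding m_def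
      by (subst integral_nonneg_eq_0_iff_AE[symmetric]) auto
    moreover have "AE x in lborel. n x = 0" using True ni pn0 unfolding mn
      by (subst integral_nonneg_eq_0_iff_AE[symmetric]) auto
    ultimately show ?thesis by auto
  next
    case False
    have m0: "m > 0" using False pn0 unfolding m_def by (metis integral_nonneg_AE AE_I2 order_le_less)
    define M1 where "M1 = density lborel (\<lambda>x. ennreal (p x / m))"
    define M2 where "M2 = density lborel (\<lambda>x. ennreal (n x / m))"
    have d1: "real_distribution M1"
      unfolding real_distribution_def real_distribution_axioms_def
    proof (intro conjI)
      show "prob_space M1" unfolding M1_def
      proof
        have "emeasure (density lborel (\<lambda>x. ennreal (p x / m))) (space (density lborel (\<lambda>x. ennreal (p x / m))))
          = (\<integral>\<^sup>+x. ennreal (p x / m) \<partial>lborel)"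
          by (simp add: emeasure_density)
        also have "\<dots> = ennreal (integral\<^sup>L lborel (\<lambda>x. p x / m))"
          using pi pn0 m0 by (intro nn_integral_eq_integral) auto
        also have "\<dots> = 1" using m0 by (simp add: m_def)
        finally show "emeasure (density lborel (\<lambda>x. ennreal (p x / m))) (space (density lborel (\<lambda>x. ennreal (p x / m)))) = 1" .
      qed
      show "sets M1 = sets borel" unfolding M1_def by simp
    qed
    have d2: "real_distribution M2"
      unfolding real_distribution_def real_distribution_axioms_def
    proof (intro conjI)
      show "prob_space M2" unfolding M2_def
      proof
        have "emeasure (density lborel (\<lambda>x. ennreal (n x / m))) (space (density lborel (\<lambda>x. ennreal (n x / m))))
          = (\<integral>\<^sup>+x. ennreal (n x / m) \<partial>lborel)"
          by (simp add: emeasure_density)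
        also have "\<dots> = ennreal (integral\<^sup>L lborel (\<lambda>x. n x / m))"
          using ni pn0 m0 by (intro nn_integral_eq_integral) auto
        also have "\<dots> = 1" using m0 by (simp add: mn)
        finally show "emeasure (density lborel (\<lambda>x. ennreal (n x / m))) (space (density lborel (\<lambda>x. ennreal (n x / m)))) = 1" .
      qed
      show "sets M2 = sets borel" unfolding M2_def by simp
    qed
    have "char M1 = char M2"
    proof
      fix t
      have "char M1 t = (CLINT x|lborel. (p x / m) *\<^sub>R iexp (t*x))"
        unfolding M1_def char_def using pn0 m0
        by (subst integral_density) auto
      also have "\<dots> = (CLINT x|lborel. complex_of_real (p x) * iexp (t*x)) / m"
        by (simp add: scaleR_conv_of_real mult.commute mult.left_commute)
      also have "\<dots> = (CLINT x|lborel. complex_of_real (n x) * iexp (t*x)) / m" using eqc[of t] by (simp only:)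
      also have "\<dots> = (CLINT x|lborel. (n x / m) *\<^sub>R iexp (t*x))"
        by (simp add: scaleR_conv_of_real mult.commute mult.left_commute)
      also have "\<dots> = char M2 t"
        unfolding M2_def char_def using pn0 m0
        by (subst integral_density) auto
      finally show "char M1 t = char M2 t" .
    qed
    then have "M1 = M2" using Levy_uniqueness d1 d2 by blast
    then have "AE x in lborel. ennreal (p x / m) = ennreal (n x / m)"
      unfolding M1_def M2_def by (subst (asm) sigma_finite_measure.density_unique_iff[OF sigma_finite_lborel]) auto
    then show ?thesis
    proof eventually_elim
      case (elim x)
      have "p x / m = n x / m" using elim pn0[of x] m0 by (subst (asm) ennreal_inj) auto
      then show ?case using m0 by (simp add: field_simps)
    qed
  qed
  then show ?thesis by eventually_elim (simp add: rpn)
qed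
lemma UQ:
  fixes h :: "real \<Rightarrow> complex"
  assumes hi: "integrable lborel h"
    and z: "\<And>t. (CLINT x|lborel. h x * iexp (t*x)) = 0"
  shows "AE x in lborel. h x = 0"
proof -
  have hm[measurable]: "h \<in> borel_measurable borel" using hi by auto
  have i1: "integrable lborel (\<lambda>x. h x * iexp (t*x))" for t
    by (rule Bochner_Integration.integrable_bound[OF hi]) (auto simp: norm_mult)
  have i2: "integrable lborel (\<lambda>x. cnj (h x) * iexp (t*x))" for t
    by (rule Bochner_Integration.integrable_bound[OF hi]) (auto simp: norm_mult)
  have zc: "(CLINT x|lborel. cnj (h x) * iexp (t*x)) = 0" for t
  proof -
    have "(CLINT x|lborel. cnj (h x) * iexp (t*x)) = (CLINT x|lborel. cnj (h x * iexp ((-t)*x)))"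
      by (rule Bochner_Integration.integral_cong) (simp_all add: exp_cnj)
    also have "\<dots> = cnj (CLINT x|lborel. h x * iexp ((-t)*x))" by (rule Bochner_Integration.integral_cnj)
    also have "\<dots> = 0" by (simp only: z complex_cnj_zero)
    finally show ?thesis .
  qed
  have "AE x in lborel. Re (h x) = 0"
  proof (rule UQ_real)
    show "integrable lborel (\<lambda>x. Re (h x))" using hi by auto
    fix t
    have "(CLINT x|lborel. complex_of_real (Re (h x)) * iexp (t*x))
       = (CLINT x|lborel. (h x * iexp (t*x) + cnj (h x) * iexp (t*x)) / 2)"
      by (rule Bochner_Integration.integral_cong) (simp_all add: distrib_right[symmetric] complex_add_cnj)
    also have "\<dots> = 0" using i1[of t] i2[of t] z[of t] zc[of t] by simp
    finally show "(CLINT x|lborel. complex_of_real (Re (h x)) * iexp (t*x)) = 0" .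
  qed
  moreover have "AE x in lborel. Im (h x) = 0"
  proof (rule UQ_real)
    show "integrable lborel (\<lambda>x. Im (h x))" using hi by auto
    fix t
    have "(CLINT x|lborel. complex_of_real (Im (h x)) * iexp (t*x))
       = (CLINT x|lborel. (h x * iexp (t*x) - cnj (h x) * iexp (t*x)) / (2 * \<i>))"
      by (rule Bochner_Integration.integral_cong) (simp_all add: left_diff_distrib[symmetric] complex_diff_cnj, simp add: algebra_simps)
    also have "\<dots> = 0" using i1[of t] i2[of t] z[of t] zc[of t] by simp
    finally show "(CLINT x|lborel. complex_of_real (Im (h x)) * iexp (t*x)) = 0" .
  qed
  ultimately show ?thesis by eventually_elim (simp add: complex_eq_iff)
qed

definition ek :: "real \<Rightarrow> real \<Rightarrow> complex" where
  "ek p x = exp (- \<i> * complex_of_real (p * x))"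

definition gs :: "real \<Rightarrow> real" where
  "gs x = exp (- (x^2) / 2)"

definition cc :: real where "cc = 1 / sqrt (2 * pi)"

definition FT :: "(real \<Rightarrow> complex) \<Rightarrow> real \<Rightarrow> complex" where
  "FT g p = complex_of_real cc * (CLINT x|lborel. g x * ek p x)"

lemma ek_measurable[measurable (raw)]:
  "f \<in> borel_measurable M \<Longrightarrow> g \<in> borel_measurable M \<Longrightarrow> (\<lambda>x. ek (f x) (g x)) \<in> borel_measurable M"
  unfolding ek_def by measurable

lemma gs_cont: "continuous_on UNIV gs"
  unfolding gs_def by (intro continuous_intros) auto

lemma gs_measurable[measurable (raw)]:
  "f \<in> borel_measurable M \<Longrightarrow> (\<lambda>x. gs (f x)) \<in> borel_measurable M"
proof -
  assume f: "f \<in> borel_measurable M"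
  have "gs \<in> borel_measurable borel" by (rule borel_measurable_continuous_onI[OF gs_cont])
  from measurable_compose[OF f this] show ?thesis by (simp add: o_def)
qed

lemma norm_ek[simp]: "norm (ek p x) = 1"
proof -
  have "ek p x = exp (\<i> * complex_of_real (- (p * x)))" unfolding ek_def by simp
  then show ?thesis by (simp only: norm_exp_i_times)
qed

lemma ek_mult: "ek p x * ek q x = ek (p + q) x"
  unfolding ek_def by (simp add: exp_add[symmetric] algebra_simps)

lemma ek_mult2: "ek p x * ek p y = ek p (x + y)"
  unfolding ek_def by (simp add: exp_add[symmetric] algebra_simps)

lemma ek_comm: "ek p x = ek x p"
  unfolding ek_def by (simp add: mult.commute)

lemma cnj_ek: "cnj (ek p x) = ek (-p) x"
  unfolding ek_def by (simp add: exp_cnj)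

lemma ek_0[simp]: "ek 0 x = 1" "ek p 0 = 1"
  unfolding ek_def by simp_all

lemma iexp_ek: "iexp (t * x) = ek (-t) x"
  unfolding ek_def by simp

lemma gs_pos: "gs x > 0" unfolding gs_def by simp
lemma gs_le1: "gs x \<le> 1" unfolding gs_def by simp
lemma gs_even: "gs (-x) = gs x" unfolding gs_def by simp

lemma gs_normal: "gs x = sqrt (2 * pi) * std_normal_density x"
  unfolding gs_def normal_density_def by simp

lemma gs_integrable[simp]: "integrable lborel gs"
proof -
  have "integrable lborel (\<lambda>x. sqrt (2 * pi) * std_normal_density x)" by simp
  then show ?thesis by (simp add: gs_normal[abs_def])
qed

lemma gs_integrable_ek: "integrable lborel (\<lambda>y. complex_of_real (gs y) * ek p y)"
  by (rule Bochner_Integration.integrable_bound[where f=gs]) (auto simp: norm_mult gs_pos less_imp_le)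

lemma gs_FT0: "(CLINT y|lborel. complex_of_real (gs y) * ek p y) = complex_of_real (sqrt (2 * pi) * gs p)"
proof -
  have "char std_normal_distribution (-p) = (CLINT x|lborel. std_normal_density x *\<^sub>R iexp ((-p) * x))"
    unfolding char_def by (subst integral_density) (auto simp: normal_density_nonneg)
  also have "\<dots> = (CLINT x|lborel. complex_of_real (gs x) * ek p x / complex_of_real (sqrt (2 * pi)))"
    by (rule Bochner_Integration.integral_cong) (simp_all add: gs_normal scaleR_conv_of_real ek_def mult.commute)
  also have "\<dots> = (CLINT x|lborel. complex_of_real (gs x) * ek p x) / sqrt (2 * pi)"
    by (rule integral_divide_zero)
  finally have "(CLINT x|lborel. complex_of_real (gs x) * ek p x) = sqrt (2 * pi) * char std_normal_distribution (-p)"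
    by (simp add: field_simps)
  also have "\<dots> = complex_of_real (sqrt (2 * pi) * gs p)"
    by (simp add: char_std_normal_distribution gs_def)
  finally show ?thesis .
qed

lemma gs_FT: "FT (\<lambda>y. complex_of_real (gs y)) p = complex_of_real (gs p)"
  unfolding FT_def gs_FT0 cc_def by simp

lemma gs_mod_integrable: "integrable lborel (\<lambda>p. complex_of_real (gs p) * ek t p * ek x p)"
  by (rule Bochner_Integration.integrable_bound[where f=gs]) (auto simp: norm_mult gs_pos less_imp_le)

lemma gs_FT_mod: "FT (\<lambda>p. complex_of_real (gs p) * ek t p) x = complex_of_real (gs (x + t))"
proof -
  have "FT (\<lambda>p. complex_of_real (gs p) * ek t p) x = FT (\<lambda>p. complex_of_real (gs p)) (x + t)"
    unfolding FT_def by (simp add: mult.assoc ek_mult add.commute)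
  then show ?thesis by (simp add: gs_FT)
qed

lemma gs_shift_integrable: "integrable lborel (\<lambda>x. complex_of_real (gs (x + t)) * ek p x)"
proof -
  have "integrable lborel (\<lambda>x. gs (x + t))"
    using lborel_integrable_real_affine[OF gs_integrable, of 1 t] by (simp add: add.commute)
  then show ?thesis
    by (rule Bochner_Integration.integrable_bound) (auto simp: norm_mult gs_pos less_imp_le)
qed

lemma gs_FT_shift: "FT (\<lambda>x. complex_of_real (gs (x + t))) p = complex_of_real (gs p) * ek (-t) p"
proof -
  have "(CLINT x|lborel. complex_of_real (gs (x + t)) * ek p x)
      = (CLINT x|lborel. complex_of_real (gs ((-t + 1 * x) + t)) * ek p (-t + 1 * x))"
    using lborel_integral_real_affine[of 1 "\<lambda>x. complex_of_real (gs (x + t)) * ek p x" "-t"] by simp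
  also have "\<dots> = (CLINT x|lborel. ek p (-t) * (complex_of_real (gs x) * ek p x))"
  proof (rule Bochner_Integration.integral_cong)
    fix x
    have "ek p (-t + 1 * x) = ek p (-t) * ek p x" by (simp add: ek_mult2)
    then show "complex_of_real (gs ((-t + 1 * x) + t)) * ek p (-t + 1 * x) = ek p (-t) * (complex_of_real (gs x) * ek p x)"
      by simp
  qed simp
  also have "\<dots> = ek p (-t) * complex_of_real (sqrt (2 * pi) * gs p)"
    by (simp add: gs_FT0)
  finally show ?thesis unfolding FT_def cc_def by (simp add: ek_comm[of p])
qed

lemma gs_scaled_FT0:
  assumes s: "\<sigma> > 0"
  shows "integrable lborel (\<lambda>p. complex_of_real (gs (\<sigma> * p)) * ek t p)"
    and "(CLINT p|lborel. complex_of_real (gs (\<sigma> * p)) * ek t p) = complex_of_real (sqrt (2 * pi) / \<sigma> * gs (t / \<sigma>))"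
proof -
  have eq: "complex_of_real (gs (\<sigma> * (0 + (1/\<sigma>) * q))) * ek t (0 + (1/\<sigma>) * q) = complex_of_real (gs q) * ek (t / \<sigma>) q" for q
    using s by (simp add: ek_def)
  have "integrable lborel (\<lambda>q. complex_of_real (gs (\<sigma> * (0 + (1/\<sigma>) * q))) * ek t (0 + (1/\<sigma>) * q))"
    unfolding eq by (rule gs_integrable_ek)
  then show "integrable lborel (\<lambda>p. complex_of_real (gs (\<sigma> * p)) * ek t p)"
    using s lborel_integrable_real_affine_iff[of "1/\<sigma>" "\<lambda>p. complex_of_real (gs (\<sigma> * p)) * ek t p" 0]
    by simp
  have "(CLINT p|lborel. complex_of_real (gs (\<sigma> * p)) * ek t p)
     = \<bar>1/\<sigma>\<bar> *\<^sub>R (CLINT q|lborel. complex_of_real (gs (\<sigma> * (0 + (1/\<sigma>) * q))) * ek t (0 + (1/\<sigma>) * q))"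
    using s by (intro lborel_integral_real_affine) simp
  also have "\<dots> = (1/\<sigma>) *\<^sub>R complex_of_real (sqrt (2 * pi) * gs (t/\<sigma>))"
    unfolding eq gs_FT0 using s by simp
  finally show "(CLINT p|lborel. complex_of_real (gs (\<sigma> * p)) * ek t p) = complex_of_real (sqrt (2 * pi) / \<sigma> * gs (t / \<sigma>))"
    by (simp add: scaleR_conv_of_real)
qed

lemma mult_formula:
  fixes g h :: "real \<Rightarrow> complex"
  assumes gi: "integrable lborel g" and hi: "integrable lborel h"
  shows "(CLINT p|lborel. (CLINT x|lborel. g x * ek p x) * h p) = (CLINT x|lborel. g x * (CLINT p|lborel. h p * ek p x))"
proof -
  have gm[measurable]: "g \<in> borel_measurable borel" using gi by auto
  have hm[measurable]: "h \<in> borel_measurable borel" using hi by auto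
  define F where "F x p = g x * h p * ek p x" for x p
  have Fint: "integrable (lborel \<Otimes>\<^sub>M lborel) (case_prod F)"
  proof (rule lborel_pair.Fubini_integrable)
    show "case_prod F \<in> borel_measurable (lborel \<Otimes>\<^sub>M lborel)" unfolding F_def by measurable
    have "(\<lambda>x. \<integral> p. norm (case_prod F (x, p)) \<partial>lborel) = (\<lambda>x. norm (g x) * (\<integral> p. norm (h p) \<partial>lborel))"
      unfolding F_def by (auto simp: norm_mult)
    then show "integrable lborel (\<lambda>x. \<integral> p. norm (case_prod F (x, p)) \<partial>lborel)"
      using gi by simp
    show "AE x in lborel. integrable lborel (\<lambda>p. case_prod F (x, p))"
    proof (rule AE_I2)
      fix x
      show "integrable lborel (\<lambda>p. case_prod F (x, p))"
        unfolding F_def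
        by (rule Bochner_Integration.integrable_bound[where f="\<lambda>p. g x * h p"]) (use hi in \<open>auto simp: norm_mult\<close>)
    qed
  qed
  have e1: "(CLINT x|lborel. F x p) = (CLINT x|lborel. g x * ek p x) * h p" for p
  proof -
    have "(\<lambda>x. F x p) = (\<lambda>x. (g x * ek p x) * h p)" unfolding F_def by (rule ext) (simp add: ac_simps)
    then show ?thesis by (simp only: integral_mult_left_zero)
  qed
  have e2: "(CLINT p|lborel. F x p) = g x * (CLINT p|lborel. h p * ek p x)" for x
  proof -
    have "(\<lambda>p. F x p) = (\<lambda>p. g x * (h p * ek p x))" unfolding F_def by (rule ext) (simp add: ac_simps)
    then show ?thesis by (simp only: integral_mult_right_zero)
  qed
  have "(CLINT p|lborel. (CLINT x|lborel. g x * ek p x) * h p) = (CLINT p|lborel. (CLINT x|lborel. F x p))"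
    by (simp only: e1)
  also have "\<dots> = (CLINT x|lborel. (CLINT p|lborel. F x p))"
    by (rule lborel_pair.Fubini_integral[OF Fint])
  also have "\<dots> = (CLINT x|lborel. g x * (CLINT p|lborel. h p * ek p x))"
    by (simp only: e2)
  finally show ?thesis .
qed

lemma FT_meas[measurable]:
  assumes [measurable]: "g \<in> borel_measurable borel"
  shows "(\<lambda>p. CLINT x|lborel. g x * ek p x) \<in> borel_measurable borel"
  by measurable

lemma FT_measurable[measurable]:
  assumes [measurable]: "g \<in> borel_measurable borel"
  shows "FT g \<in> borel_measurable borel"
  unfolding FT_def[abs_def] by measurable

lemma FT_bound:
  assumes gi: "integrable lborel g"
  shows "norm (CLINT x|lborel. g x * ek p x) \<le> (\<integral>x. norm (g x) \<partial>lborel)"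
proof -
  have "norm (CLINT x|lborel. g x * ek p x) \<le> (\<integral>x. norm (g x * ek p x) \<partial>lborel)"
    by (rule integral_norm_bound)
  also have "\<dots> = (\<integral>x. norm (g x) \<partial>lborel)" by (simp add: norm_mult)
  finally show ?thesis .
qed

lemma gs_nn_integral: "(\<integral>\<^sup>+x. ennreal (gs x) \<partial>lborel) = ennreal (sqrt (2 * pi))"
proof -
  have "(CLINT y|lborel. complex_of_real (gs y) * ek 0 y) = complex_of_real (sqrt (2 * pi) * gs 0)"
    by (rule gs_FT0)
  then have "integral\<^sup>L lborel (\<lambda>y. gs y) = sqrt (2 * pi)" by (simp add: gs_def)
  then show ?thesis using gs_pos by (subst nn_integral_eq_integral) (auto simp: less_imp_le)
qed

lemma K_nn_integral:
  assumes s: "\<sigma> > 0"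
  shows "(\<integral>\<^sup>+y. ennreal (sqrt (2 * pi) / \<sigma> * gs ((y - x) / \<sigma>)) \<partial>lborel) = ennreal (2 * pi)"
proof -
  have "(\<integral>\<^sup>+y. ennreal (sqrt (2 * pi) / \<sigma> * gs ((y - x) / \<sigma>)) \<partial>lborel)
    = \<bar>\<sigma>\<bar> * (\<integral>\<^sup>+q. ennreal (sqrt (2 * pi) / \<sigma> * gs (((x + \<sigma> * q) - x) / \<sigma>)) \<partial>lborel)"
    using s by (intro nn_integral_real_affine) auto
  also have "\<dots> = ennreal \<sigma> * (\<integral>\<^sup>+q. ennreal (sqrt (2 * pi) / \<sigma>) * ennreal (gs q) \<partial>lborel)"
  proof -
    have "ennreal (sqrt (2 * pi) / \<sigma> * gs (((x + \<sigma> * q) - x) / \<sigma>)) = ennreal (sqrt (2 * pi) / \<sigma>) * ennreal (gs q)" for q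
      using s gs_pos[of q] by (simp add: ennreal_mult[symmetric])
    then show ?thesis using s by simp
  qed
  also have "\<dots> = ennreal \<sigma> * (ennreal (sqrt (2 * pi) / \<sigma>) * ennreal (sqrt (2 * pi)))"
    by (simp add: nn_integral_cmult gs_nn_integral)
  also have "\<dots> = ennreal (2 * pi)"
    using s by (simp add: ennreal_mult''[symmetric] ennreal_mult[symmetric])
  finally show ?thesis .
qed

lemma K_nn_integral_c:
  assumes s: "\<sigma> > 0" and c: "c \<ge> 0"
  shows "(\<integral>\<^sup>+y. ennreal (c * (sqrt (2 * pi) / \<sigma> * gs ((y - x) / \<sigma>))) \<partial>lborel) = ennreal (c * (2 * pi))"
proof -
  have "(\<integral>\<^sup>+y. ennreal (c * (sqrt (2 * pi) / \<sigma> * gs ((y - x) / \<sigma>))) \<partial>lborel)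
     = (\<integral>\<^sup>+y. ennreal c * ennreal (sqrt (2 * pi) / \<sigma> * gs ((y - x) / \<sigma>)) \<partial>lborel)"
    by (intro nn_integral_cong ennreal_mult) (use s c gs_pos in \<open>auto intro!: mult_nonneg_nonneg divide_nonneg_pos less_imp_le\<close>)
  also have "\<dots> = ennreal c * ennreal (2 * pi)"
    using K_nn_integral[OF s, of x] by (simp add: nn_integral_cmult)
  also have "\<dots> = ennreal (c * (2 * pi))" using c by (simp add: ennreal_mult)
  finally show ?thesis .
qed

lemma bessel_weighted:
  fixes g :: "real \<Rightarrow> complex"
  assumes gi: "integrable lborel g" and g2: "integrable lborel (\<lambda>x. (cmod (g x))\<^sup>2)" and s: "\<sigma> > 0"
  shows "(\<integral>\<^sup>+p. ennreal ((cmod (CLINT x|lborel. g x * ek p x))\<^sup>2 * gs (\<sigma> * p)) \<partial>lborel)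
     \<le> ennreal (2 * pi) * (\<integral>\<^sup>+x. ennreal ((cmod (g x))\<^sup>2) \<partial>lborel)"
proof -
  have gm[measurable]: "g \<in> borel_measurable borel" using gi by auto
  define G where "G p = (CLINT x|lborel. g x * ek p x)" for p
  define A where "A = (\<integral>x. norm (g x) \<partial>lborel)"
  define K where "K t = sqrt (2 * pi) / \<sigma> * gs (t / \<sigma>)" for t
  have Gm[measurable]: "G \<in> borel_measurable borel" unfolding G_def[abs_def] by measurable
  have hG: "norm (G p) \<le> A" for p unfolding G_def A_def by (rule FT_bound[OF gi])
  have A0: "A \<ge> 0" unfolding A_def by simp
  have K0: "K t \<ge> 0" for t unfolding K_def using s gs_pos[of "t/\<sigma>"] by simp
  have Kb: "K t \<le> sqrt (2 * pi) / \<sigma>" for t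
  proof -
    have "sqrt (2*pi) / \<sigma> * gs (t/\<sigma>) \<le> sqrt (2*pi) / \<sigma> * 1"
      by (rule mult_left_mono) (use s gs_le1 in auto)
    then show ?thesis unfolding K_def by simp
  qed
  have Km[measurable]: "K \<in> borel_measurable borel" unfolding K_def[abs_def] by measurable
  have gsi: "integrable lborel (\<lambda>p. gs (\<sigma> * p))"
    using lborel_integrable_real_affine[OF gs_integrable, of \<sigma> 0] s by simp
  define h where "h p = cnj (G p) * complex_of_real (gs (\<sigma> * p))" for p
  have hm[measurable]: "h \<in> borel_measurable borel" unfolding h_def[abs_def] by measurable
  have hi: "integrable lborel h"
  proof (rule Bochner_Integration.integrable_bound[where f="\<lambda>p. A * gs (\<sigma> * p)"])
    show "integrable lborel (\<lambda>p. A * gs (\<sigma> * p))" using gsi by simp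
    show "h \<in> borel_measurable lborel" by measurable
    show "AE p in lborel. norm (h p) \<le> norm (A * gs (\<sigma> * p))"
    proof (rule AE_I2)
      fix p
      have "norm (h p) = cmod (G p) * gs (\<sigma> * p)" using gs_pos[of "\<sigma>*p"] by (simp add: h_def norm_mult)
      also have "\<dots> \<le> A * gs (\<sigma> * p)" by (rule mult_right_mono[OF hG]) (use gs_pos in \<open>simp add: less_imp_le\<close>)
      also have "\<dots> = norm (A * gs (\<sigma> * p))" using A0 gs_pos[of "\<sigma>*p"] by simp
      finally show "norm (h p) \<le> norm (A * gs (\<sigma> * p))" .
    qed
  qed
  define J where "J = (CLINT p|lborel. G p * h p)"
  have Ja: "J = (CLINT x|lborel. g x * (CLINT p|lborel. h p * ek p x))"
    unfolding J_def G_def by (rule mult_formula[OF gi hi])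
  have Jb: "(CLINT p|lborel. h p * ek p x) = cnj (CLINT y|lborel. g y * complex_of_real (K (y - x)))" for x
  proof -
    define h' where "h' p = complex_of_real (gs (\<sigma> * p)) * ek p (-x)" for p
    have h'm[measurable]: "h' \<in> borel_measurable borel" unfolding h'_def[abs_def] by measurable
    have h'i: "integrable lborel h'"
      by (rule Bochner_Integration.integrable_bound[where f="\<lambda>p. gs (\<sigma> * p)"])
         (use gsi gs_pos in \<open>auto simp: h'_def norm_mult less_imp_le\<close>)
    have "(CLINT p|lborel. h p * ek p x) = cnj (CLINT p|lborel. cnj (h p * ek p x))"
      by (simp only: Bochner_Integration.integral_cnj complex_cnj_cnj)
    also have "(CLINT p|lborel. cnj (h p * ek p x)) = (CLINT p|lborel. G p * h' p)"
      by (rule Bochner_Integration.integral_cong) (auto simp: h_def h'_def ek_def exp_cnj)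
    also have "\<dots> = (CLINT y|lborel. g y * (CLINT p|lborel. h' p * ek p y))"
      unfolding G_def by (rule mult_formula[OF gi h'i])
    also have "\<dots> = (CLINT y|lborel. g y * complex_of_real (K (y - x)))"
    proof (rule Bochner_Integration.integral_cong)
      fix y
      have "(CLINT p|lborel. h' p * ek p y) = (CLINT p|lborel. complex_of_real (gs (\<sigma> * p)) * ek (y - x) p)"
        by (rule Bochner_Integration.integral_cong) (auto simp: h'_def ek_def algebra_simps exp_add[symmetric])
      also have "\<dots> = complex_of_real (K (y - x))" unfolding K_def by (rule gs_scaled_FT0(2)[OF s])
      finally show "g y * (CLINT p|lborel. h' p * ek p y) = g y * complex_of_real (K (y - x))" by simp
    qed simp
    finally show ?thesis .
  qed
  have Gh: "G p * h p = complex_of_real ((cmod (G p))\<^sup>2 * gs (\<sigma> * p))" for p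
  proof -
    have "G p * cnj (G p) = complex_of_real ((cmod (G p))\<^sup>2)" by (simp only: complex_norm_square)
    then show ?thesis unfolding h_def by (simp add: mult.assoc[symmetric])
  qed
  have Ri: "integrable lborel (\<lambda>p. (cmod (G p))\<^sup>2 * gs (\<sigma> * p))"
  proof (rule Bochner_Integration.integrable_bound[where f="\<lambda>p. A\<^sup>2 * gs (\<sigma> * p)"])
    show "integrable lborel (\<lambda>p. A\<^sup>2 * gs (\<sigma> * p))" using gsi by simp
    show "(\<lambda>p. (cmod (G p))\<^sup>2 * gs (\<sigma> * p)) \<in> borel_measurable lborel" by measurable
    show "AE p in lborel. norm ((cmod (G p))\<^sup>2 * gs (\<sigma> * p)) \<le> norm (A\<^sup>2 * gs (\<sigma> * p))"
    proof (rule AE_I2)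
      fix p
      have "(cmod (G p))\<^sup>2 \<le> A\<^sup>2" using hG[of p] by (simp add: power_mono)
      then show "norm ((cmod (G p))\<^sup>2 * gs (\<sigma> * p)) \<le> norm (A\<^sup>2 * gs (\<sigma> * p))"
        using gs_pos[of "\<sigma> * p"] by (simp add: abs_mult mult_right_mono)
    qed
  qed
  have "J = complex_of_real (\<integral>p. (cmod (G p))\<^sup>2 * gs (\<sigma> * p) \<partial>lborel)"
    unfolding J_def Gh by (rule integral_complex_of_real)
  then have step1: "(\<integral>\<^sup>+p. ennreal ((cmod (G p))\<^sup>2 * gs (\<sigma> * p)) \<partial>lborel) \<le> ennreal (cmod J)"
    using Ri gs_pos by (subst nn_integral_eq_integral) (auto simp: less_imp_le)
  define Q where "Q = (\<integral>\<^sup>+x. ennreal ((cmod (g x))\<^sup>2) \<partial>lborel)"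
  define B where "B = (\<integral>p. norm (h p) \<partial>lborel)"
  have Hb: "norm (CLINT p|lborel. h p * ek p x) \<le> B" for x
  proof -
    have "norm (CLINT p|lborel. h p * ek p x) \<le> (\<integral>p. norm (h p * ek p x) \<partial>lborel)"
      by (rule integral_norm_bound)
    then show ?thesis by (simp add: B_def norm_mult)
  qed
  have gHi: "integrable lborel (\<lambda>x. g x * (CLINT p|lborel. h p * ek p x))"
  proof (rule Bochner_Integration.integrable_bound[where f="\<lambda>x. B * norm (g x)"])
    show "integrable lborel (\<lambda>x. B * norm (g x))" using gi by simp
    show "(\<lambda>x. g x * (CLINT p|lborel. h p * ek p x)) \<in> borel_measurable lborel" by measurable
    show "AE x in lborel. norm (g x * (CLINT p|lborel. h p * ek p x)) \<le> norm (B * norm (g x))"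
    proof (rule AE_I2)
      fix x
      have B0: "B \<ge> 0" unfolding B_def by simp
      have "norm (g x * (CLINT p|lborel. h p * ek p x)) \<le> norm (g x) * B"
        unfolding norm_mult by (rule mult_left_mono[OF Hb]) simp
      then show "norm (g x * (CLINT p|lborel. h p * ek p x)) \<le> norm (B * norm (g x))"
        using B0 by (simp add: mult.commute)
    qed
  qed
  have step2: "ennreal (cmod J) \<le> (\<integral>\<^sup>+x. ennreal (norm (g x)) * ennreal (norm (CLINT y|lborel. g y * complex_of_real (K (y - x)))) \<partial>lborel)"
  proof -
    have "ennreal (cmod J) \<le> (\<integral>\<^sup>+x. norm (g x * (CLINT p|lborel. h p * ek p x)) \<partial>lborel)"
      unfolding Ja by (rule integral_norm_bound_ennreal[OF gHi])
    also have "\<dots> = (\<integral>\<^sup>+x. ennreal (norm (g x)) * ennreal (norm (CLINT y|lborel. g y * complex_of_real (K (y - x)))) \<partial>lborel)"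
      by (intro nn_integral_cong) (simp add: Jb norm_mult ennreal_mult)
    finally show ?thesis .
  qed
  have step3: "ennreal (norm (CLINT y|lborel. g y * complex_of_real (K (y - x)))) \<le> (\<integral>\<^sup>+y. ennreal (norm (g y) * K (y - x)) \<partial>lborel)" for x
  proof -
    have ii: "integrable lborel (\<lambda>y. g y * complex_of_real (K (y - x)))"
    proof (rule Bochner_Integration.integrable_bound[where f="\<lambda>y. sqrt (2 * pi) / \<sigma> * norm (g y)"])
      show "integrable lborel (\<lambda>y. sqrt (2 * pi) / \<sigma> * norm (g y))" using gi by simp
      show "(\<lambda>y. g y * complex_of_real (K (y - x))) \<in> borel_measurable lborel" by measurable
      show "AE y in lborel. norm (g y * complex_of_real (K (y - x))) \<le> norm (sqrt (2 * pi) / \<sigma> * norm (g y))"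
      proof (rule AE_I2)
        fix y
        have "norm (g y) * K (y - x) \<le> norm (g y) * (sqrt (2 * pi) / \<sigma>)"
          by (rule mult_left_mono[OF Kb]) simp
        then show "norm (g y * complex_of_real (K (y - x))) \<le> norm (sqrt (2 * pi) / \<sigma> * norm (g y))"
          using K0[of "y - x"] s by (simp add: norm_mult abs_of_nonneg mult.commute)
      qed
    qed
    have "ennreal (norm (CLINT y|lborel. g y * complex_of_real (K (y - x)))) \<le> (\<integral>\<^sup>+y. norm (g y * complex_of_real (K (y - x))) \<partial>lborel)"
      by (rule integral_norm_bound_ennreal[OF ii])
    also have "\<dots> = (\<integral>\<^sup>+y. ennreal (norm (g y) * K (y - x)) \<partial>lborel)"
      using K0 by (intro nn_integral_cong) (simp add: norm_mult abs_of_nonneg)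
    finally show ?thesis .
  qed
  have step4: "(\<integral>\<^sup>+x. ennreal (norm (g x)) * ennreal (norm (CLINT y|lborel. g y * complex_of_real (K (y - x)))) \<partial>lborel)
     \<le> (\<integral>\<^sup>+x. (\<integral>\<^sup>+y. ennreal ((cmod (g x))\<^sup>2 / 2 * K (y - x)) + ennreal ((cmod (g y))\<^sup>2 / 2 * K (y - x)) \<partial>lborel) \<partial>lborel)"
  proof (rule nn_integral_mono)
    fix x
    have "ennreal (norm (g x)) * ennreal (norm (CLINT y|lborel. g y * complex_of_real (K (y - x))))
      \<le> ennreal (norm (g x)) * (\<integral>\<^sup>+y. ennreal (norm (g y) * K (y - x)) \<partial>lborel)"
      by (rule mult_left_mono[OF step3]) simp
    also have "\<dots> = (\<integral>\<^sup>+y. ennreal (norm (g x)) * ennreal (norm (g y) * K (y - x)) \<partial>lborel)"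
      by (rule nn_integral_cmult[symmetric]) measurable
    also have "\<dots> \<le> (\<integral>\<^sup>+y. ennreal ((cmod (g x))\<^sup>2 / 2 * K (y - x)) + ennreal ((cmod (g y))\<^sup>2 / 2 * K (y - x)) \<partial>lborel)"
    proof (rule nn_integral_mono)
      fix y
      have ab: "norm (g x) * norm (g y) \<le> (cmod (g x))\<^sup>2 / 2 + (cmod (g y))\<^sup>2 / 2"
        using sum_squares_bound[of "cmod (g x)" "cmod (g y)"] by (simp add: field_simps)
      have "ennreal (norm (g x)) * ennreal (norm (g y) * K (y - x)) = ennreal ((norm (g x) * norm (g y)) * K (y - x))"
        using K0 by (simp add: ennreal_mult[symmetric] mult.assoc)
      also have "\<dots> \<le> ennreal (((cmod (g x))\<^sup>2 / 2 + (cmod (g y))\<^sup>2 / 2) * K (y - x))"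
        by (intro ennreal_leI mult_right_mono ab K0)
      also have "\<dots> = ennreal ((cmod (g x))\<^sup>2 / 2 * K (y - x)) + ennreal ((cmod (g y))\<^sup>2 / 2 * K (y - x))"
        by (subst distrib_right, rule ennreal_plus) (use K0[of "y - x"] in auto)
      finally show "ennreal (norm (g x)) * ennreal (norm (g y) * K (y - x)) \<le> ennreal ((cmod (g x))\<^sup>2 / 2 * K (y - x)) + ennreal ((cmod (g y))\<^sup>2 / 2 * K (y - x))" .
    qed
    finally show "ennreal (norm (g x)) * ennreal (norm (CLINT y|lborel. g y * complex_of_real (K (y - x))))
      \<le> (\<integral>\<^sup>+y. ennreal ((cmod (g x))\<^sup>2 / 2 * K (y - x)) + ennreal ((cmod (g y))\<^sup>2 / 2 * K (y - x)) \<partial>lborel)" .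
  qed
  have step5: "(\<integral>\<^sup>+x. (\<integral>\<^sup>+y. ennreal ((cmod (g x))\<^sup>2 / 2 * K (y - x)) + ennreal ((cmod (g y))\<^sup>2 / 2 * K (y - x)) \<partial>lborel) \<partial>lborel)
     = ennreal (2 * pi) * Q"
  proof -
    have i1: "(\<integral>\<^sup>+y. ennreal ((cmod (g x))\<^sup>2 / 2 * K (y - x)) \<partial>lborel) = ennreal ((cmod (g x))\<^sup>2 / 2 * (2 * pi))" for x
      unfolding K_def by (rule K_nn_integral_c[OF s]) simp
    have i2: "(\<integral>\<^sup>+x. ennreal ((cmod (g y))\<^sup>2 / 2 * K (y - x)) \<partial>lborel) = ennreal ((cmod (g y))\<^sup>2 / 2 * (2 * pi))" for y
    proof -
      have "K (y - x) = sqrt (2 * pi) / \<sigma> * gs ((x - y) / \<sigma>)" for x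
      proof -
        have "(y - x) / \<sigma> = - ((x - y) / \<sigma>)" by (simp only: minus_divide_left minus_diff_eq)
        then show ?thesis unfolding K_def using gs_even[of "(x - y) / \<sigma>"] by simp
      qed
      then show ?thesis using K_nn_integral_c[OF s, of "(cmod (g y))\<^sup>2 / 2" y] by simp
    qed
    have "(\<integral>\<^sup>+x. (\<integral>\<^sup>+y. ennreal ((cmod (g x))\<^sup>2 / 2 * K (y - x)) + ennreal ((cmod (g y))\<^sup>2 / 2 * K (y - x)) \<partial>lborel) \<partial>lborel)
      = (\<integral>\<^sup>+x. ennreal ((cmod (g x))\<^sup>2 / 2 * (2 * pi)) + (\<integral>\<^sup>+y. ennreal ((cmod (g y))\<^sup>2 / 2 * K (y - x)) \<partial>lborel) \<partial>lborel)"
    proof (intro nn_integral_cong)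
      fix x
      have "(\<integral>\<^sup>+y. ennreal ((cmod (g x))\<^sup>2 / 2 * K (y - x)) + ennreal ((cmod (g y))\<^sup>2 / 2 * K (y - x)) \<partial>lborel)
        = (\<integral>\<^sup>+y. ennreal ((cmod (g x))\<^sup>2 / 2 * K (y - x)) \<partial>lborel) + (\<integral>\<^sup>+y. ennreal ((cmod (g y))\<^sup>2 / 2 * K (y - x)) \<partial>lborel)"
        by (rule nn_integral_add) measurable
      then show "(\<integral>\<^sup>+y. ennreal ((cmod (g x))\<^sup>2 / 2 * K (y - x)) + ennreal ((cmod (g y))\<^sup>2 / 2 * K (y - x)) \<partial>lborel)
        = ennreal ((cmod (g x))\<^sup>2 / 2 * (2 * pi)) + (\<integral>\<^sup>+y. ennreal ((cmod (g y))\<^sup>2 / 2 * K (y - x)) \<partial>lborel)"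
        by (simp only: i1)
    qed
    also have "\<dots> = (\<integral>\<^sup>+x. ennreal ((cmod (g x))\<^sup>2 / 2 * (2 * pi)) \<partial>lborel) + (\<integral>\<^sup>+x. (\<integral>\<^sup>+y. ennreal ((cmod (g y))\<^sup>2 / 2 * K (y - x)) \<partial>lborel) \<partial>lborel)"
      by (rule nn_integral_add) measurable
    also have "(\<integral>\<^sup>+x. (\<integral>\<^sup>+y. ennreal ((cmod (g y))\<^sup>2 / 2 * K (y - x)) \<partial>lborel) \<partial>lborel)
       = (\<integral>\<^sup>+y. (\<integral>\<^sup>+x. ennreal ((cmod (g y))\<^sup>2 / 2 * K (y - x)) \<partial>lborel) \<partial>lborel)"
      by (rule lborel_pair.Fubini') measurable
    also have "\<dots> = (\<integral>\<^sup>+y. ennreal ((cmod (g y))\<^sup>2 / 2 * (2 * pi)) \<partial>lborel)"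
      by (simp only: i2)
    finally have eqS: "(\<integral>\<^sup>+x. (\<integral>\<^sup>+y. ennreal ((cmod (g x))\<^sup>2 / 2 * K (y - x)) + ennreal ((cmod (g y))\<^sup>2 / 2 * K (y - x)) \<partial>lborel) \<partial>lborel)
      = (\<integral>\<^sup>+x. ennreal ((cmod (g x))\<^sup>2 / 2 * (2 * pi)) \<partial>lborel) + (\<integral>\<^sup>+y. ennreal ((cmod (g y))\<^sup>2 / 2 * (2 * pi)) \<partial>lborel)" .
    have pw: "ennreal ((cmod (g x))\<^sup>2 / 2 * (2 * pi)) = ennreal pi * ennreal ((cmod (g x))\<^sup>2)" for x
    proof -
      have "(cmod (g x))\<^sup>2 / 2 * (2 * pi) = pi * (cmod (g x))\<^sup>2" by simp
      then show ?thesis by (simp only: ennreal_mult pi_ge_zero zero_le_power2)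
    qed
    have e1: "(\<integral>\<^sup>+x. ennreal ((cmod (g x))\<^sup>2 / 2 * (2 * pi)) \<partial>lborel) = ennreal pi * Q"
      unfolding pw Q_def by (rule nn_integral_cmult) measurable
    have tw: "ennreal (2 * pi) = ennreal pi + ennreal pi"
    proof -
      have "ennreal (2 * pi) = ennreal (pi + pi)" by simp
      also have "\<dots> = ennreal pi + ennreal pi" by (rule ennreal_plus) auto
      finally show ?thesis .
    qed
    show ?thesis unfolding eqS e1 tw by (simp only: distrib_right)
  qed
  have "(\<integral>\<^sup>+p. ennreal ((cmod (G p))\<^sup>2 * gs (\<sigma> * p)) \<partial>lborel) \<le> ennreal (2 * pi) * Q"
    by (rule order_trans[OF step1 order_trans[OF step2 order_trans[OF step4 eq_refl[OF step5]]]])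
  then show ?thesis unfolding G_def Q_def .
qed

lemma cc_sq: "cc\<^sup>2 * (2 * pi) = 1"
  unfolding cc_def by (simp add: power_divide)

lemma cc_sq': "cc\<^sup>2 * 2 * pi = 1"
  unfolding cc_def by (simp add: power_divide)

lemma bessel:
  fixes g :: "real \<Rightarrow> complex"
  assumes gi: "integrable lborel g" and g2: "integrable lborel (\<lambda>x. (cmod (g x))\<^sup>2)"
  shows "(\<integral>\<^sup>+p. ennreal ((cmod (FT g p))\<^sup>2) \<partial>lborel) \<le> (\<integral>\<^sup>+x. ennreal ((cmod (g x))\<^sup>2) \<partial>lborel)"
proof -
  have gm[measurable]: "g \<in> borel_measurable borel" using gi by auto
  define Q where "Q = (\<integral>\<^sup>+x. ennreal ((cmod (g x))\<^sup>2) \<partial>lborel)"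
  define G where "G p = (CLINT x|lborel. g x * ek p x)" for p
  have Gm[measurable]: "G \<in> borel_measurable borel" unfolding G_def[abs_def] by measurable
  have FTG: "(cmod (FT g p))\<^sup>2 = cc\<^sup>2 * (cmod (G p))\<^sup>2" for p
    unfolding FT_def G_def by (simp add: norm_mult power_mult_distrib)
  define u where "u n p = ennreal ((cmod (FT g p))\<^sup>2 * gs (1 / real (Suc n) * p))" for n p
  have um[measurable]: "u n \<in> borel_measurable borel" for n unfolding u_def[abs_def] by measurable
  have ub: "integral\<^sup>N lborel (u n) \<le> Q" for n
  proof -
    have s: "1 / real (Suc n) > 0" by simp
    have "integral\<^sup>N lborel (u n) = (\<integral>\<^sup>+p. ennreal (cc\<^sup>2) * ennreal ((cmod (G p))\<^sup>2 * gs (1 / real (Suc n) * p)) \<partial>lborel)"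
      unfolding u_def FTG using gs_pos by (intro nn_integral_cong) (simp add: ennreal_mult[symmetric] mult.assoc less_imp_le)
    also have "\<dots> = ennreal (cc\<^sup>2) * (\<integral>\<^sup>+p. ennreal ((cmod (G p))\<^sup>2 * gs (1 / real (Suc n) * p)) \<partial>lborel)"
      by (rule nn_integral_cmult) measurable
    also have "\<dots> \<le> ennreal (cc\<^sup>2) * (ennreal (2 * pi) * Q)"
      unfolding G_def Q_def by (rule mult_left_mono[OF bessel_weighted[OF gi g2 s]]) simp
    also have "\<dots> = Q"
    proof -
      have "ennreal (cc\<^sup>2) * ennreal (2 * pi) = ennreal (cc\<^sup>2 * (2 * pi))" by (rule ennreal_mult[symmetric]) auto
      then show ?thesis by (simp only: mult.assoc[symmetric] cc_sq' ennreal_1 mult_1)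
    qed
    finally show ?thesis .
  qed
  have lim: "(\<lambda>n. u n p) \<longlonglongrightarrow> ennreal ((cmod (FT g p))\<^sup>2)" for p
  proof -
    have "(\<lambda>n. 1 / real (Suc n) * p) \<longlonglongrightarrow> 0 * p"
      by (intro tendsto_mult tendsto_const) (rule LIMSEQ_Suc[OF lim_const_over_n])
    then have "(\<lambda>n. gs (1 / real (Suc n) * p)) \<longlonglongrightarrow> gs 0"
      using gs_cont by (intro isCont_tendsto_compose[where g=gs]) (auto simp: continuous_on_eq_continuous_at)
    then have "(\<lambda>n. (cmod (FT g p))\<^sup>2 * gs (1 / real (Suc n) * p)) \<longlonglongrightarrow> (cmod (FT g p))\<^sup>2 * 1"
      by (intro tendsto_mult tendsto_const) (simp add: gs_def)
    then show ?thesis unfolding u_def by (intro tendsto_ennrealI) simp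
  qed
  have "(\<integral>\<^sup>+p. ennreal ((cmod (FT g p))\<^sup>2) \<partial>lborel) = (\<integral>\<^sup>+p. liminf (\<lambda>n. u n p) \<partial>lborel)"
  proof (intro nn_integral_cong)
    fix p
    show "ennreal ((cmod (FT g p))\<^sup>2) = liminf (\<lambda>n. u n p)"
      by (rule lim_imp_Liminf[symmetric]) (simp_all add: lim)
  qed
  also have "\<dots> \<le> liminf (\<lambda>n. integral\<^sup>N lborel (u n))"
    by (rule nn_integral_liminf) simp
  also have "\<dots> \<le> Q"
    using ub by (intro order_trans[OF Liminf_le_Limsup Limsup_bounded]) auto
  finally show ?thesis unfolding Q_def .
qed

definition DD :: "(real \<Rightarrow> complex) \<Rightarrow> (real \<Rightarrow> complex) \<Rightarrow> ennreal" where
  "DD F H = (\<integral>\<^sup>+p. ennreal ((cmod (F p - H p))\<^sup>2) \<partial>lborel)"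

lemma sq_tri_real: "(cmod (a - c))\<^sup>2 \<le> 2 * (cmod (a - b))\<^sup>2 + 2 * (cmod (b - c))\<^sup>2"
proof -
  have "cmod (a - c) \<le> cmod (a - b) + cmod (b - c)" using norm_triangle_ineq[of "a - b" "b - c"] by simp
  then have "(cmod (a - c))\<^sup>2 \<le> (cmod (a - b) + cmod (b - c))\<^sup>2" by (simp add: power_mono)
  also have "\<dots> \<le> 2 * (cmod (a - b))\<^sup>2 + 2 * (cmod (b - c))\<^sup>2"
    using sum_squares_bound[of "cmod (a - b)" "cmod (b - c)"] by (simp add: power2_sum)
  finally show ?thesis .
qed

lemma DD_tri:
  assumes [measurable]: "F \<in> borel_measurable borel" "G \<in> borel_measurable borel" "H \<in> borel_measurable borel"
  shows "DD F H \<le> 2 * DD F G + 2 * DD G H"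
proof -
  have "DD F H \<le> (\<integral>\<^sup>+p. 2 * ennreal ((cmod (F p - G p))\<^sup>2) + 2 * ennreal ((cmod (G p - H p))\<^sup>2) \<partial>lborel)"
    unfolding DD_def
  proof (rule nn_integral_mono)
    fix p
    have "ennreal ((cmod (F p - H p))\<^sup>2) \<le> ennreal (2 * (cmod (F p - G p))\<^sup>2 + 2 * (cmod (G p - H p))\<^sup>2)"
      by (rule ennreal_leI[OF sq_tri_real])
    also have "\<dots> = 2 * ennreal ((cmod (F p - G p))\<^sup>2) + 2 * ennreal ((cmod (G p - H p))\<^sup>2)"
      by (simp add: ennreal_plus ennreal_mult)
    finally show "ennreal ((cmod (F p - H p))\<^sup>2) \<le> 2 * ennreal ((cmod (F p - G p))\<^sup>2) + 2 * ennreal ((cmod (G p - H p))\<^sup>2)" .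
  qed
  also have "\<dots> = 2 * DD F G + 2 * DD G H"
    unfolding DD_def by (simp add: nn_integral_add nn_integral_cmult)
  finally show ?thesis .
qed

lemma DD_sym: "DD F G = DD G F"
  unfolding DD_def by (simp add: norm_minus_commute)

lemma DD_zero_AE:
  assumes [measurable]: "F \<in> borel_measurable borel" "G \<in> borel_measurable borel"
    and "DD F G = 0"
  shows "AE p in lborel. F p = G p"
proof -
  have "AE p in lborel. ennreal ((cmod (F p - G p))\<^sup>2) = 0"
    using assms(3) unfolding DD_def by (subst (asm) nn_integral_0_iff_AE) auto
  then show ?thesis by eventually_elim simp
qed

lemma L2lim_unique:
  fixes T :: "real \<Rightarrow> real \<Rightarrow> complex"
  assumes [measurable]: "F \<in> borel_measurable borel" "G \<in> borel_measurable borel"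
    and Tm[measurable]: "\<And>R. T R \<in> borel_measurable borel"
    and lF: "((\<lambda>R. DD F (T R)) \<longlongrightarrow> 0) at_top"
    and lG: "((\<lambda>R. DD G (T R)) \<longlongrightarrow> 0) at_top"
  shows "AE p in lborel. F p = G p"
proof -
  have l1: "((\<lambda>R. 2 * DD F (T R) + 2 * DD G (T R)) \<longlongrightarrow> 0) at_top"
    using tendsto_add[OF ennreal_tendsto_cmult[OF _ lF, of 2] ennreal_tendsto_cmult[OF _ lG, of 2]]
    by simp
  have l2: "((\<lambda>R. DD F G) \<longlongrightarrow> DD F G) at_top" by simp
  have l3: "\<forall>\<^sub>F R in at_top. DD F G \<le> 2 * DD F (T R) + 2 * DD G (T R)"
    using DD_tri[of F "T _" G] by (auto simp: DD_sym)
  have "DD F G \<le> 0" by (rule tendsto_le[OF trivial_limit_at_top_linorder l1 l2 l3])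
  then show ?thesis by (intro DD_zero_AE) auto
qed

lemma L2_complete:
  fixes T :: "real \<Rightarrow> real \<Rightarrow> complex" and \<tau> :: "real \<Rightarrow> ennreal"
  assumes Tm[measurable]: "\<And>R. T R \<in> borel_measurable borel"
    and tau: "\<And>R S. R \<le> S \<Longrightarrow> DD (T R) (T S) \<le> \<tau> R"
    and tau0: "(\<tau> \<longlongrightarrow> 0) at_top"
  shows "\<exists>G. G \<in> borel_measurable borel \<and> ((\<lambda>R. DD G (T R)) \<longlongrightarrow> 0) at_top"
proof -
  have "\<exists>M. \<forall>R\<ge>M. \<tau> R < ennreal ((1/8)^n)" for n
  proof -
    have "ennreal ((1/8)^n) > 0" by simp
    from order_tendstoD(2)[OF tau0 this] show ?thesis by (simp add: eventually_at_top_linorder)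
  qed
  then obtain M where M: "\<And>n R. R \<ge> M n \<Longrightarrow> \<tau> R < ennreal ((1/8)^n)" by metis
  define Rs where "Rs n = (\<Sum>k\<le>n. \<bar>M k\<bar>) + real n" for n
  have RsM: "M n \<le> Rs n" for n
  proof -
    have "\<bar>M n\<bar> \<le> (\<Sum>k\<le>n. \<bar>M k\<bar>)" by (rule member_le_sum) auto
    then show ?thesis unfolding Rs_def by linarith
  qed
  have Rs_Suc: "Rs n \<le> Rs (Suc n)" for n unfolding Rs_def by simp
  have Rs_mono: "m \<le> n \<Longrightarrow> Rs m \<le> Rs n" for m n
    by (rule lift_Suc_mono_le[of Rs]) (auto simp: Rs_Suc)
  have Rs_n: "real n \<le> Rs n" for n
  proof -
    have "0 \<le> (\<Sum>k\<le>n. \<bar>M k\<bar>)" by (rule sum_nonneg) auto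
    then show ?thesis unfolding Rs_def by linarith
  qed
  define g where "g n = T (Rs n)" for n
  have gm[measurable]: "g n \<in> borel_measurable borel" for n unfolding g_def by simp
  have dstep: "DD (g n) (g (Suc n)) \<le> ennreal ((1/8)^n)" for n
    unfolding g_def using tau[OF Rs_Suc[of n]] M[OF RsM[of n]] by (meson less_imp_le order_trans)
  define S where "S x = (\<Sum>n. ennreal (2^n * (cmod (g (Suc n) x - g n x))\<^sup>2))" for x
  have Sm[measurable]: "S \<in> borel_measurable borel" unfolding S_def[abs_def] by measurable
  have "integral\<^sup>N lborel S = (\<Sum>n. \<integral>\<^sup>+x. ennreal (2^n * (cmod (g (Suc n) x - g n x))\<^sup>2) \<partial>lborel)"
    unfolding S_def by (rule nn_integral_suminf) measurable
  also have "\<dots> \<le> (\<Sum>n. ennreal ((1/4)^n))"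
  proof (rule suminf_le)
    fix n
    have "(\<integral>\<^sup>+x. ennreal (2^n * (cmod (g (Suc n) x - g n x))\<^sup>2) \<partial>lborel)
        = (\<integral>\<^sup>+x. ennreal (2^n) * ennreal ((cmod (g (Suc n) x - g n x))\<^sup>2) \<partial>lborel)"
      by (intro nn_integral_cong) (simp add: ennreal_mult)
    also have "\<dots> = ennreal (2^n) * DD (g (Suc n)) (g n)"
      unfolding DD_def by (rule nn_integral_cmult) measurable
    also have "\<dots> \<le> ennreal (2^n) * ennreal ((1/8)^n)"
      using dstep[of n] by (intro mult_left_mono) (auto simp: DD_sym)
    also have "\<dots> = ennreal ((1/4)^n)"
    proof -
      have "(2::real)^n * (1/8)^n = (1/4)^n" by (simp add: power_mult_distrib[symmetric])
      then show ?thesis by (simp add: ennreal_mult[symmetric])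
    qed
    finally show "(\<integral>\<^sup>+x. ennreal (2^n * (cmod (g (Suc n) x - g n x))\<^sup>2) \<partial>lborel) \<le> ennreal ((1/4)^n)" .
  qed auto
  also have "\<dots> = ennreal (\<Sum>n. (1/4::real)^n)"
    by (rule suminf_ennreal2) auto
  finally have "integral\<^sup>N lborel S \<noteq> \<infinity>" by (auto simp: top_unique)
  then have Sfin: "AE x in lborel. S x \<noteq> \<infinity>" by (intro nn_integral_PInf_AE) simp_all
  have conv: "AE x in lborel. convergent (\<lambda>n. g n x)"
    using Sfin
  proof eventually_elim
    case (elim x)
    define c where "c = enn2real (S x)"
    have Sc: "S x = ennreal c" unfolding c_def by (rule ennreal_enn2real[symmetric]) (use elim in \<open>simp add: less_top\<close>)
    have c0: "c \<ge> 0" unfolding c_def by simp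
    have tb: "2^n * (cmod (g (Suc n) x - g n x))\<^sup>2 \<le> c" for n
    proof -
      have single: "F n \<le> suminf F" for F :: "nat \<Rightarrow> ennreal"
      proof -
        have "sum F {n} \<le> suminf F" by (rule sum_le_suminf) auto
        then show ?thesis by simp
      qed
      have "ennreal (2^n * (cmod (g (Suc n) x - g n x))\<^sup>2) \<le> S x"
        unfolding S_def by (rule single)
      then show ?thesis unfolding Sc using c0 by simp
    qed
    have db: "norm (g (Suc n) x - g n x) \<le> sqrt c * sqrt (1/2) ^ n" for n
    proof -
      have e2: "(2::real)^n * (1/2)^n = 1" by (simp add: power_mult_distrib[symmetric])
      have "(2^n * (cmod (g (Suc n) x - g n x))\<^sup>2) * (1/2)^n = (cmod (g (Suc n) x - g n x))\<^sup>2 * ((2::real)^n * (1/2)^n)"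
        by (simp only: ac_simps)
      then have "(cmod (g (Suc n) x - g n x))\<^sup>2 = (2^n * (cmod (g (Suc n) x - g n x))\<^sup>2) * (1/2)^n"
        unfolding e2 by simp
      also have "\<dots> \<le> c * (1/2)^n" by (rule mult_right_mono[OF tb]) simp
      finally have le: "(cmod (g (Suc n) x - g n x))\<^sup>2 \<le> c * (1/2)^n" .
      have "norm (g (Suc n) x - g n x) \<le> sqrt (c * (1/2)^n)"
        by (rule real_le_rsqrt) (simp add: le)
      also have "\<dots> = sqrt c * sqrt (1/2) ^ n" by (simp add: real_sqrt_mult real_sqrt_power)
      finally show ?thesis .
    qed
    have "summable (\<lambda>n. sqrt c * sqrt (1/2::real) ^ n)"
      by (intro summable_mult summable_geometric) (simp add: real_sqrt_less_iff)
    then have "summable (\<lambda>n. norm (g (Suc n) x - g n x))"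
      by (rule summable_comparison_test[rotated]) (use db in auto)
    then have "summable (\<lambda>n. g (Suc n) x - g n x)" by (rule summable_norm_cancel)
    then have "(\<lambda>n. g 0 x + (\<Sum>k<n. g (Suc k) x - g k x)) \<longlonglongrightarrow> g 0 x + (\<Sum>k. g (Suc k) x - g k x)"
      by (intro tendsto_add tendsto_const summable_LIMSEQ)
    then have "(\<lambda>n. g n x) \<longlonglongrightarrow> g 0 x + (\<Sum>k. g (Suc k) x - g k x)"
      by (simp add: sum_lessThan_telescope[of "\<lambda>k. g k x"])
    then show ?case by (rule convergentI)
  qed
  define G where "G x = lim (\<lambda>n. g n x)" for x
  have Gm[measurable]: "G \<in> borel_measurable borel" unfolding G_def[abs_def] by measurable
  have Glim: "AE x in lborel. (\<lambda>n. g n x) \<longlonglongrightarrow> G x"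
    using conv by eventually_elim (simp add: G_def convergent_LIMSEQ_iff)
  have bound: "DD G (T R) \<le> \<tau> R" for R
  proof -
    have "DD G (T R) = (\<integral>\<^sup>+x. liminf (\<lambda>n. ennreal ((cmod (g n x - T R x))\<^sup>2)) \<partial>lborel)"
      unfolding DD_def
    proof (rule nn_integral_cong_AE)
      show "AE x in lborel. ennreal ((cmod (G x - T R x))\<^sup>2) = liminf (\<lambda>n. ennreal ((cmod (g n x - T R x))\<^sup>2))"
        using Glim
      proof eventually_elim
        case (elim x)
        have "(\<lambda>n. g n x - T R x) \<longlonglongrightarrow> G x - T R x" by (rule tendsto_diff[OF elim tendsto_const])
        then have "(\<lambda>n. (cmod (g n x - T R x))\<^sup>2) \<longlonglongrightarrow> (cmod (G x - T R x))\<^sup>2"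
          by (intro tendsto_power tendsto_norm)
        then have "(\<lambda>n. ennreal ((cmod (g n x - T R x))\<^sup>2)) \<longlonglongrightarrow> ennreal ((cmod (G x - T R x))\<^sup>2)"
          by (rule tendsto_ennrealI)
        then show ?case by (rule lim_imp_Liminf[symmetric, rotated]) simp
      qed
    qed
    also have "\<dots> \<le> liminf (\<lambda>n. DD (g n) (T R))"
      unfolding DD_def by (rule nn_integral_liminf) measurable
    also have "\<dots> \<le> \<tau> R"
    proof (intro order_trans[OF Liminf_le_Limsup Limsup_bounded])
      show "\<forall>\<^sub>F n in sequentially. DD (g n) (T R) \<le> \<tau> R"
        unfolding eventually_sequentially
      proof (intro exI allI impI)
        fix n assume n: "nat \<lceil>R\<rceil> \<le> n"
        have "R \<le> Rs n" using Rs_n[of n] n by linarith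
        then show "DD (g n) (T R) \<le> \<tau> R" unfolding g_def using tau by (simp add: DD_sym)
      qed
    qed simp
    finally show ?thesis .
  qed
  have "((\<lambda>R. DD G (T R)) \<longlongrightarrow> 0) at_top"
    by (rule tendsto_sandwich[of "\<lambda>_. 0" _ _ \<tau>]) (use bound tau0 in auto)
  then show ?thesis using Gm by blast
qed

definition L2c :: "(real \<Rightarrow> complex) \<Rightarrow> bool" where
  "L2c g \<longleftrightarrow> g \<in> borel_measurable borel \<and> integrable lborel (\<lambda>x. (cmod (g x))\<^sup>2)"

definition TT :: "real \<Rightarrow> (real \<Rightarrow> complex) \<Rightarrow> real \<Rightarrow> complex" where
  "TT R g p = FT (\<lambda>x. indicator {-R..R} x * g x) p"

lemma L2c_meas: "L2c g \<Longrightarrow> g \<in> borel_measurable borel" unfolding L2c_def by simp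

lemma L2c_nn: "L2c g \<Longrightarrow> (\<integral>\<^sup>+x. ennreal ((cmod (g x))\<^sup>2) \<partial>lborel) < \<infinity>"
  unfolding L2c_def by (simp add: integrable_iff_bounded)

lemma L2c_I:
  assumes "g \<in> borel_measurable borel" "(\<integral>\<^sup>+x. ennreal ((cmod (g x))\<^sup>2) \<partial>lborel) < \<infinity>"
  shows "L2c g"
  unfolding L2c_def using assms by (simp add: integrable_iff_bounded)

lemma le_1_sq: "(t::real) \<le> 1 + t\<^sup>2"
proof -
  have h: "0 \<le> (t - 1/2)\<^sup>2" by simp
  have "(t - 1/2)\<^sup>2 = t\<^sup>2 - t + 1/4" by (simp add: power2_eq_square field_simps)
  with h show ?thesis by linarith
qed

lemma trunc_L1:
  assumes g: "L2c g"
  shows "integrable lborel (\<lambda>x. indicator {-R..R} x * g x)"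
proof -
  have gm[measurable]: "g \<in> borel_measurable borel" using g by (rule L2c_meas)
  have g2: "integrable lborel (\<lambda>x. (cmod (g x))\<^sup>2)" using g unfolding L2c_def by simp
  have ii: "integrable lborel (\<lambda>x. indicator {-R..R} x :: real)"
    by (rule integrable_real_indicator) (auto simp: emeasure_lborel_Icc_eq)
  show ?thesis
  proof (rule Bochner_Integration.integrable_bound[where f="\<lambda>x. indicator {-R..R} x + (cmod (g x))\<^sup>2"])
    show "integrable lborel (\<lambda>x. indicator {-R..R} x + (cmod (g x))\<^sup>2)"
      using ii g2 by (rule Bochner_Integration.integrable_add)
    show "(\<lambda>x. indicator {-R..R} x * g x) \<in> borel_measurable lborel" by measurable
    show "AE x in lborel. norm (indicator {-R..R} x * g x) \<le> norm (indicator {-R..R} x + (cmod (g x))\<^sup>2)"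
    proof (rule AE_I2)
      fix x
      have "cmod (g x) \<le> 1 + (cmod (g x))\<^sup>2" by (rule le_1_sq)
      then show "norm (indicator {-R..R} x * g x) \<le> norm (indicator {-R..R} x + (cmod (g x))\<^sup>2)"
        by (cases "x \<in> {-R..R}") (auto simp: norm_mult)
    qed
  qed
qed

lemma trunc_L2:
  assumes g: "L2c g" and am: "a \<in> borel_measurable borel" and a1: "\<And>x. cmod (a x) \<le> 1"
  shows "integrable lborel (\<lambda>x. (cmod ((a x :: complex) * g x))\<^sup>2)"
proof -
  have gm[measurable]: "g \<in> borel_measurable borel" using g by (rule L2c_meas)
  have [measurable]: "a \<in> borel_measurable borel" by (rule am)
  have g2: "integrable lborel (\<lambda>x. (cmod (g x))\<^sup>2)" using g unfolding L2c_def by simp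
  show ?thesis
  proof (rule Bochner_Integration.integrable_bound[OF g2])
    show "(\<lambda>x. (cmod (a x * g x))\<^sup>2) \<in> borel_measurable lborel" by measurable
    show "AE x in lborel. norm ((cmod (a x * g x))\<^sup>2) \<le> norm ((cmod (g x))\<^sup>2)"
    proof (rule AE_I2)
      fix x
      have "cmod (a x) * cmod (g x) \<le> 1 * cmod (g x)" by (rule mult_right_mono[OF a1]) simp
      then show "norm ((cmod (a x * g x))\<^sup>2) \<le> norm ((cmod (g x))\<^sup>2)"
        by (simp add: norm_mult power_mono)
    qed
  qed
qed

lemma TT_meas[measurable]:
  assumes "g \<in> borel_measurable borel"
  shows "TT R g \<in> borel_measurable borel"
  unfolding TT_def[abs_def] using assms by measurable

lemma FT_diff:
  assumes "integrable lborel a" "integrable lborel b"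
  shows "FT a p - FT b p = FT (\<lambda>x. a x - b x) p"
proof -
  have ia: "integrable lborel (\<lambda>x. a x * ek p x)"
    by (rule Bochner_Integration.integrable_bound[OF assms(1)]) (use assms(1) in \<open>auto simp: norm_mult\<close>)
  have ib: "integrable lborel (\<lambda>x. b x * ek p x)"
    by (rule Bochner_Integration.integrable_bound[OF assms(2)]) (use assms(2) in \<open>auto simp: norm_mult\<close>)
  have e: "(CLINT x|lborel. (a x - b x) * ek p x) = (CLINT x|lborel. a x * ek p x) - (CLINT x|lborel. b x * ek p x)"
    by (simp only: left_diff_distrib Bochner_Integration.integral_diff[OF ia ib])
  show ?thesis unfolding FT_def e by (simp add: right_diff_distrib)
qed

lemma TT_bessel:
  assumes g: "L2c g"
  shows "(\<integral>\<^sup>+p. ennreal ((cmod (TT R g p))\<^sup>2) \<partial>lborel) \<le> (\<integral>\<^sup>+x. ennreal ((cmod (g x))\<^sup>2) \<partial>lborel)"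
proof -
  have gm[measurable]: "g \<in> borel_measurable borel" using g by (rule L2c_meas)
  have "(\<integral>\<^sup>+p. ennreal ((cmod (TT R g p))\<^sup>2) \<partial>lborel) \<le> (\<integral>\<^sup>+x. ennreal ((cmod (indicator {-R..R} x * g x))\<^sup>2) \<partial>lborel)"
    unfolding TT_def
    by (rule bessel[OF trunc_L1[OF g] trunc_L2[OF g]]) (auto simp: indicator_def)
  also have "\<dots> \<le> (\<integral>\<^sup>+x. ennreal ((cmod (g x))\<^sup>2) \<partial>lborel)"
    by (intro nn_integral_mono ennreal_leI) (auto simp: indicator_def)
  finally show ?thesis .
qed

lemma TT_cauchy:
  assumes g: "L2c g" and RS: "R \<le> S"
  shows "DD (TT R g) (TT S g) \<le> (\<integral>\<^sup>+x. ennreal ((cmod (g x))\<^sup>2 * indicator {x. R < \<bar>x\<bar>} x) \<partial>lborel)"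
proof -
  have gm[measurable]: "g \<in> borel_measurable borel" using g by (rule L2c_meas)
  define h where "h x = (indicator {-S..S} x - indicator {-R..R} x) * g x" for x
  have hm[measurable]: "h \<in> borel_measurable borel" unfolding h_def[abs_def] by measurable
  have hi: "integrable lborel h"
  proof -
    have "integrable lborel (\<lambda>x. indicator {-S..S} x * g x - indicator {-R..R} x * g x)"
      by (intro Bochner_Integration.integrable_diff trunc_L1[OF g])
    then show ?thesis unfolding h_def by (simp add: left_diff_distrib)
  qed
  have h2: "integrable lborel (\<lambda>x. (cmod (h x))\<^sup>2)"
    unfolding h_def by (rule trunc_L2[OF g]) (auto simp: indicator_def)
  have eq: "TT S g p - TT R g p = FT h p" for p
  proof -
    have "TT S g p - TT R g p = FT (\<lambda>x. indicator {-S..S} x * g x - indicator {-R..R} x * g x) p"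
      unfolding TT_def by (rule FT_diff[OF trunc_L1[OF g] trunc_L1[OF g]])
    then show ?thesis unfolding h_def by (simp add: left_diff_distrib)
  qed
  have "DD (TT R g) (TT S g) = (\<integral>\<^sup>+p. ennreal ((cmod (FT h p))\<^sup>2) \<partial>lborel)"
    unfolding DD_def by (intro nn_integral_cong) (simp add: eq[symmetric] norm_minus_commute)
  also have "\<dots> \<le> (\<integral>\<^sup>+x. ennreal ((cmod (h x))\<^sup>2) \<partial>lborel)"
    by (rule bessel[OF hi h2])
  also have "\<dots> \<le> (\<integral>\<^sup>+x. ennreal ((cmod (g x))\<^sup>2 * indicator {x. R < \<bar>x\<bar>} x) \<partial>lborel)"
  proof (intro nn_integral_mono ennreal_leI)
    fix x
    show "(cmod (h x))\<^sup>2 \<le> (cmod (g x))\<^sup>2 * indicator {x. R < \<bar>x\<bar>} x"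
    proof (cases "x \<in> {-R..R}")
      case True
      then have "x \<in> {-S..S}" using RS by auto
      with True show ?thesis by (simp add: h_def)
    next
      case False
      then have "R < \<bar>x\<bar>" by auto
      then show ?thesis using False by (cases "x \<in> {-S..S}") (auto simp: h_def norm_mult)
    qed
  qed
  finally show ?thesis .
qed

lemma tau_lim:
  assumes g: "L2c g"
  shows "((\<lambda>R. \<integral>\<^sup>+x. ennreal ((cmod (g x))\<^sup>2 * indicator {x. R < \<bar>x\<bar>} x) \<partial>lborel) \<longlongrightarrow> 0) at_top"
proof -
  have gm[measurable]: "g \<in> borel_measurable borel" using g by (rule L2c_meas)
  have g2: "integrable lborel (\<lambda>x. (cmod (g x))\<^sup>2)" using g unfolding L2c_def by simp
  define s where "s R x = (cmod (g x))\<^sup>2 * indicator {x. R < \<bar>x\<bar>} x" for R x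
  have sm[measurable]: "s R \<in> borel_measurable borel" for R unfolding s_def[abs_def] by measurable
  have si: "integrable lborel (s R)" for R
    by (rule Bochner_Integration.integrable_bound[OF g2]) (auto simp: s_def indicator_def)
  have f1: "(\<lambda>x::real. 0::real) \<in> borel_measurable lborel" by simp
  have f2: "\<And>R. s R \<in> borel_measurable lborel" by simp
  have f4: "AE x in lborel. ((\<lambda>R. s R x) \<longlongrightarrow> 0) at_top"
  proof (rule AE_I2)
    fix x
    have "\<forall>\<^sub>F R in at_top. s R x = 0"
      unfolding eventually_at_top_linorder by (rule exI[of _ "\<bar>x\<bar>"]) (auto simp: s_def)
    then show "((\<lambda>R. s R x) \<longlongrightarrow> 0) at_top" by (rule tendsto_eventually)
  qed
  have f5: "\<forall>\<^sub>F R in at_top. AE x in lborel. norm (s R x) \<le> (cmod (g x))\<^sup>2"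
    by (rule always_eventually) (auto simp: s_def indicator_def)
  have "((\<lambda>R. integral\<^sup>L lborel (s R)) \<longlongrightarrow> integral\<^sup>L lborel (\<lambda>x::real. 0::real)) at_top"
    by (rule integral_dominated_convergence_at_top[OF f1 f2 g2 f4 f5])
  then have l: "((\<lambda>R. integral\<^sup>L lborel (s R)) \<longlongrightarrow> 0) at_top" by simp
  have "(\<integral>\<^sup>+x. ennreal ((cmod (g x))\<^sup>2 * indicator {x. R < \<bar>x\<bar>} x) \<partial>lborel) = ennreal (integral\<^sup>L lborel (s R))" for R
    unfolding s_def[symmetric] by (rule nn_integral_eq_integral[OF si]) (simp add: s_def)
  moreover have "((\<lambda>R. ennreal (integral\<^sup>L lborel (s R))) \<longlongrightarrow> ennreal 0) at_top"
    by (rule tendsto_ennrealI[OF l])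
  ultimately show ?thesis by simp
qed

lemma L2_FT_exists:
  assumes g: "L2c g"
  shows "\<exists>G. L2c G \<and> ((\<lambda>R. DD G (TT R g)) \<longlongrightarrow> 0) at_top"
proof -
  have gm[measurable]: "g \<in> borel_measurable borel" using g by (rule L2c_meas)
  obtain G where Gm[measurable]: "G \<in> borel_measurable borel" and lim: "((\<lambda>R. DD G (TT R g)) \<longlongrightarrow> 0) at_top"
    using L2_complete[of "\<lambda>R. TT R g", OF _ TT_cauchy[OF g] tau_lim[OF g]] by auto
  have "\<forall>\<^sub>F R in at_top. DD G (TT R g) < 1"
    using order_tendstoD(2)[OF lim] by simp
  then obtain R where R: "DD G (TT R g) < 1" by (auto simp: eventually_at_top_linorder)
  have t1: "DD G (\<lambda>_. 0) \<le> 2 * DD G (TT R g) + 2 * DD (TT R g) (\<lambda>_. 0)"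
    by (rule DD_tri) auto
  have t2: "DD (TT R g) (\<lambda>_. 0) \<le> (\<integral>\<^sup>+x. ennreal ((cmod (g x))\<^sup>2) \<partial>lborel)"
    unfolding DD_def using TT_bessel[OF g] by simp
  have t3: "2 * DD G (TT R g) + 2 * (\<integral>\<^sup>+x. ennreal ((cmod (g x))\<^sup>2) \<partial>lborel) < \<infinity>"
  proof -
    have a1: "DD G (TT R g) < \<top>" using R by (rule order.strict_trans) simp
    have a2: "(\<integral>\<^sup>+x. ennreal ((cmod (g x))\<^sup>2) \<partial>lborel) < \<infinity>" by (rule L2c_nn[OF g])
    show ?thesis using a1 a2 by (simp add: ennreal_mult_less_top)
  qed
  have t4: "2 * DD G (TT R g) + 2 * DD (TT R g) (\<lambda>_. 0) \<le> 2 * DD G (TT R g) + 2 * (\<integral>\<^sup>+x. ennreal ((cmod (g x))\<^sup>2) \<partial>lborel)"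
    by (intro add_left_mono mult_left_mono t2) simp
  have "DD G (\<lambda>_. 0) < \<infinity>"
    by (rule le_less_trans[OF order_trans[OF t1 t4] t3])
  then have "(\<integral>\<^sup>+x. ennreal ((cmod (G x))\<^sup>2) \<partial>lborel) < \<infinity>"
    unfolding DD_def by simp
  then have "L2c G" by (intro L2c_I) auto
  with lim show ?thesis by blast
qed

lemma prod_L1:
  assumes a: "L2c a" and b: "L2c b"
  shows "integrable lborel (\<lambda>x. a x * b x)"
proof -
  have [measurable]: "a \<in> borel_measurable borel" "b \<in> borel_measurable borel" using a b by (auto intro: L2c_meas)
  have a2: "integrable lborel (\<lambda>x. (cmod (a x))\<^sup>2)" and b2: "integrable lborel (\<lambda>x. (cmod (b x))\<^sup>2)"
    using a b unfolding L2c_def by auto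
  show ?thesis
  proof (rule Bochner_Integration.integrable_bound[where f="\<lambda>x. (cmod (a x))\<^sup>2 + (cmod (b x))\<^sup>2"])
    show "integrable lborel (\<lambda>x. (cmod (a x))\<^sup>2 + (cmod (b x))\<^sup>2)" using a2 b2 by simp
    show "(\<lambda>x. a x * b x) \<in> borel_measurable lborel" by measurable
    show "AE x in lborel. norm (a x * b x) \<le> norm ((cmod (a x))\<^sup>2 + (cmod (b x))\<^sup>2)"
    proof (rule AE_I2)
      fix x
      have "2 * cmod (a x) * cmod (b x) \<le> (cmod (a x))\<^sup>2 + (cmod (b x))\<^sup>2" by (rule sum_squares_bound)
      moreover have "0 \<le> cmod (a x) * cmod (b x)" by simp
      ultimately have "cmod (a x) * cmod (b x) \<le> (cmod (a x))\<^sup>2 + (cmod (b x))\<^sup>2" by linarith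
      then show "norm (a x * b x) \<le> norm ((cmod (a x))\<^sup>2 + (cmod (b x))\<^sup>2)"
        by (simp add: norm_mult)
    qed
  qed
qed

lemma CS:
  assumes a: "L2c a" and b: "L2c b"
  shows "(\<integral>x. cmod (a x) * cmod (b x) \<partial>lborel) \<le> sqrt (\<integral>x. (cmod (a x))\<^sup>2 \<partial>lborel) * sqrt (\<integral>x. (cmod (b x))\<^sup>2 \<partial>lborel)"
proof -
  have [measurable]: "a \<in> borel_measurable borel" "b \<in> borel_measurable borel" using a b by (auto intro: L2c_meas)
  have a2: "integrable lborel (\<lambda>x. (cmod (a x))\<^sup>2)" and b2: "integrable lborel (\<lambda>x. (cmod (b x))\<^sup>2)"
    using a b unfolding L2c_def by auto
  have abi: "integrable lborel (\<lambda>x. cmod (a x) * cmod (b x))"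
    using prod_L1[OF a b] by (simp add: norm_mult[symmetric])
  define A where "A = (\<integral>x. (cmod (a x))\<^sup>2 \<partial>lborel)"
  define B where "B = (\<integral>x. (cmod (b x))\<^sup>2 \<partial>lborel)"
  define I where "I = (\<integral>x. cmod (a x) * cmod (b x) \<partial>lborel)"
  have A0: "A \<ge> 0" unfolding A_def by simp
  have B0: "B \<ge> 0" unfolding B_def by simp
  have I0: "I \<ge> 0" unfolding I_def by simp
  have quad: "0 \<le> t\<^sup>2 * A - 2 * t * I + B" for t
  proof -
    have "0 \<le> (\<integral>x. (t * cmod (a x) - cmod (b x))\<^sup>2 \<partial>lborel)" by simp
    also have "(\<integral>x. (t * cmod (a x) - cmod (b x))\<^sup>2 \<partial>lborel)
        = (\<integral>x. t\<^sup>2 * (cmod (a x))\<^sup>2 - 2 * t * (cmod (a x) * cmod (b x)) + (cmod (b x))\<^sup>2 \<partial>lborel)"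
      by (rule Bochner_Integration.integral_cong) (simp_all add: power2_diff power_mult_distrib)
    also have "\<dots> = t\<^sup>2 * A - 2 * t * I + B"
      using a2 b2 abi unfolding A_def B_def I_def by simp
    finally show ?thesis .
  qed
  have "I\<^sup>2 \<le> A * B"
  proof (cases "A = 0")
    case True
    have "I = 0"
    proof (rule ccontr)
      assume "I \<noteq> 0"
      with I0 have Ip: "I > 0" by simp
      have "0 \<le> ((B + 1) / (2 * I))\<^sup>2 * A - 2 * ((B + 1) / (2 * I)) * I + B" by (rule quad)
      also have "\<dots> = -1" using True Ip by (simp add: field_simps)
      finally show False by simp
    qed
    then show ?thesis using A0 B0 by simp
  next
    case False
    with A0 have Ap: "A > 0" by simp
    have "0 \<le> (I / A)\<^sup>2 * A - 2 * (I / A) * I + B" by (rule quad)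
    also have "\<dots> = B - I\<^sup>2 / A" using Ap by (simp add: field_simps power2_eq_square)
    finally have "I\<^sup>2 / A \<le> B" by simp
    then show ?thesis using Ap by (simp add: field_simps mult.commute)
  qed
  then have "I \<le> sqrt (A * B)" by (rule real_le_rsqrt)
  then show ?thesis unfolding A_def B_def I_def by (simp add: real_sqrt_mult)
qed

lemma TT_L2c:
  assumes g: "L2c g"
  shows "L2c (TT R g)"
proof (rule L2c_I)
  show "TT R g \<in> borel_measurable borel" using L2c_meas[OF g] by simp
  show "(\<integral>\<^sup>+p. ennreal ((cmod (TT R g p))\<^sup>2) \<partial>lborel) < \<infinity>"
    using TT_bessel[OF g, of R] L2c_nn[OF g] by (rule le_less_trans)
qed

lemma L2c_diff:
  assumes "L2c a" "L2c b"
  shows "L2c (\<lambda>x. a x - b x)"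
proof (rule L2c_I)
  have [measurable]: "a \<in> borel_measurable borel" "b \<in> borel_measurable borel" using assms by (auto intro: L2c_meas)
  show "(\<lambda>x. a x - b x) \<in> borel_measurable borel" by measurable
  have "DD a b \<le> 2 * DD a (\<lambda>_. 0) + 2 * DD (\<lambda>_. 0) b" by (rule DD_tri) auto
  also have "\<dots> < \<infinity>"
    using L2c_nn[OF assms(1)] L2c_nn[OF assms(2)] unfolding DD_def by (simp add: ennreal_mult_less_top)
  finally show "(\<integral>\<^sup>+x. ennreal ((cmod (a x - b x))\<^sup>2) \<partial>lborel) < \<infinity>" unfolding DD_def .
qed

lemma pairing:
  assumes g: "L2c g" and G: "L2c G" and lim: "((\<lambda>R. DD G (TT R g)) \<longlongrightarrow> 0) at_top"
    and ki: "integrable lborel k" and k2: "L2c k" and Fk: "L2c (FT k)"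
  shows "(CLINT p|lborel. G p * k p) = (CLINT x|lborel. g x * FT k x)"
proof -
  have gm[measurable]: "g \<in> borel_measurable borel" using g by (rule L2c_meas)
  have Gm[measurable]: "G \<in> borel_measurable borel" using G by (rule L2c_meas)
  have km[measurable]: "k \<in> borel_measurable borel" using k2 by (rule L2c_meas)
  have Fkm[measurable]: "FT k \<in> borel_measurable borel" using Fk by (rule L2c_meas)
  define a where "a R = (CLINT p|lborel. TT R g p * k p)" for R
  have a_eq: "a R = (CLINT x|lborel. (indicator {-R..R} x * g x) * FT k x)" for R
  proof -
    have "a R = (CLINT p|lborel. complex_of_real cc * ((CLINT x|lborel. (indicator {-R..R} x * g x) * ek p x) * k p))"
      unfolding a_def TT_def FT_def by (simp add: mult.assoc)
    also have "\<dots> = complex_of_real cc * (CLINT p|lborel. (CLINT x|lborel. (indicator {-R..R} x * g x) * ek p x) * k p)"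
      by (rule integral_mult_right_zero)
    also have "(CLINT p|lborel. (CLINT x|lborel. (indicator {-R..R} x * g x) * ek p x) * k p)
       = (CLINT x|lborel. (indicator {-R..R} x * g x) * (CLINT p|lborel. k p * ek p x))"
      by (rule mult_formula[OF trunc_L1[OF g] ki])
    also have "complex_of_real cc * \<dots> = (CLINT x|lborel. complex_of_real cc * ((indicator {-R..R} x * g x) * (CLINT p|lborel. k p * ek p x)))"
      by (rule integral_mult_right_zero[symmetric])
    also have "\<dots> = (CLINT x|lborel. (indicator {-R..R} x * g x) * FT k x)"
      unfolding FT_def by (simp add: ek_comm[of _ "_::real"] ac_simps)
    finally show ?thesis .
  qed
  have gFi: "integrable lborel (\<lambda>x. g x * FT k x)" by (rule prod_L1[OF g Fk])
  have l1: "(a \<longlongrightarrow> (CLINT x|lborel. g x * FT k x)) at_top"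
  proof -
    have f1: "(\<lambda>x. g x * FT k x) \<in> borel_measurable lborel" by measurable
    have f2: "\<And>R. (\<lambda>x. (indicator {-R..R} x * g x) * FT k x) \<in> borel_measurable lborel" by measurable
    have f3: "integrable lborel (\<lambda>x. norm (g x * FT k x))" using gFi by simp
    have f4: "AE x in lborel. ((\<lambda>R. (indicator {-R..R} x * g x) * FT k x) \<longlongrightarrow> g x * FT k x) at_top"
    proof (rule AE_I2)
      fix x
      have "\<forall>\<^sub>F R in at_top. (indicator {-R..R} x * g x) * FT k x = g x * FT k x"
        unfolding eventually_at_top_linorder by (rule exI[of _ "\<bar>x\<bar>"]) (auto simp: indicator_def)
      then show "((\<lambda>R. (indicator {-R..R} x * g x) * FT k x) \<longlongrightarrow> g x * FT k x) at_top"
        by (rule tendsto_eventually[THEN tendsto_cong[THEN iffD1, rotated]]) simp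
    qed
    have f5: "\<forall>\<^sub>F R in at_top. AE x in lborel. norm ((indicator {-R..R} x * g x) * FT k x) \<le> norm (g x * FT k x)"
      by (rule always_eventually) (auto simp: indicator_def norm_mult)
    show ?thesis unfolding a_eq[abs_def]
      by (rule integral_dominated_convergence_at_top[OF f1 f2 f3 f4 f5])
  qed
  have l2: "(a \<longlongrightarrow> (CLINT p|lborel. G p * k p)) at_top"
  proof -
    define r where "r R = (\<integral>p. (cmod (G p - TT R g p))\<^sup>2 \<partial>lborel)" for R
    have Ld: "L2c (\<lambda>p. G p - TT R g p)" for R by (rule L2c_diff[OF G TT_L2c[OF g]])
    have DDr: "DD G (TT R g) = ennreal (r R)" for R
      unfolding DD_def r_def using Ld[of R] unfolding L2c_def by (intro nn_integral_eq_integral) auto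
    have r0: "r R \<ge> 0" for R unfolding r_def by simp
    have "((\<lambda>R. ennreal (r R)) \<longlongrightarrow> ennreal 0) at_top" using lim unfolding DDr by simp
    then have rlim: "(r \<longlongrightarrow> 0) at_top"
      by (subst (asm) tendsto_ennreal_iff) (auto simp: r0)
    define K where "K = (\<integral>p. (cmod (k p))\<^sup>2 \<partial>lborel)"
    have bnd: "norm (a R - (CLINT p|lborel. G p * k p)) \<le> sqrt (r R) * sqrt K" for R
    proof -
      have i1: "integrable lborel (\<lambda>p. TT R g p * k p)" by (rule prod_L1[OF TT_L2c[OF g] k2])
      have i2: "integrable lborel (\<lambda>p. G p * k p)" by (rule prod_L1[OF G k2])
      have "a R - (CLINT p|lborel. G p * k p) = (CLINT p|lborel. TT R g p * k p - G p * k p)"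
        unfolding a_def by (rule Bochner_Integration.integral_diff[OF i1 i2, symmetric])
      also have "\<dots> = (CLINT p|lborel. - ((G p - TT R g p) * k p))"
        by (rule Bochner_Integration.integral_cong) (simp_all add: algebra_simps)
      finally have "norm (a R - (CLINT p|lborel. G p * k p)) = norm (CLINT p|lborel. (G p - TT R g p) * k p)"
        by simp
      also have "\<dots> \<le> (\<integral>p. norm ((G p - TT R g p) * k p) \<partial>lborel)" by (rule integral_norm_bound)
      also have "\<dots> = (\<integral>p. cmod (G p - TT R g p) * cmod (k p) \<partial>lborel)" by (simp add: norm_mult)
      also have "\<dots> \<le> sqrt (r R) * sqrt K" unfolding r_def K_def by (rule CS[OF Ld k2])
      finally show ?thesis .
    qed
    have "((\<lambda>R. sqrt (r R) * sqrt K) \<longlongrightarrow> sqrt 0 * sqrt K) at_top"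
      by (intro tendsto_mult tendsto_const tendsto_real_sqrt rlim)
    then have lim0: "((\<lambda>R. sqrt (r R) * sqrt K) \<longlongrightarrow> 0) at_top" by simp
    have ev: "\<forall>\<^sub>F R in at_top. norm (a R - (CLINT p|lborel. G p * k p)) \<le> sqrt (r R) * sqrt K"
      by (rule always_eventually) (rule allI, rule bnd)
    have "((\<lambda>R. a R - (CLINT p|lborel. G p * k p)) \<longlongrightarrow> 0) at_top"
      by (rule Lim_null_comparison[OF ev lim0])
    then show ?thesis by (rule LIM_zero_cancel)
  qed
  show ?thesis using tendsto_unique[OF trivial_limit_at_top_linorder l2 l1] .
qed

lemma L2_real_L2c: "L2_real f \<longleftrightarrow> L2c (\<lambda>x. complex_of_real (f x))"
proof -
  have "(\<lambda>x. complex_of_real (f x)) \<in> borel_measurable borel \<longleftrightarrow> f \<in> borel_measurable borel"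
  proof
    assume m: "(\<lambda>x. complex_of_real (f x)) \<in> borel_measurable borel"
    have "(\<lambda>x. Re (complex_of_real (f x))) \<in> borel_measurable borel" using m by measurable
    then show "f \<in> borel_measurable borel" by simp
  next
    assume [measurable]: "f \<in> borel_measurable borel"
    show "(\<lambda>x. complex_of_real (f x)) \<in> borel_measurable borel" by measurable
  qed
  then show ?thesis unfolding L2_real_def L2c_def by simp
qed

lemma L2_complex_L2c: "L2_complex g \<longleftrightarrow> L2c g"
  unfolding L2_complex_def L2c_def by simp

lemma fourier_trunc_TT: "fourier_trunc \<phi> R p = TT R (\<lambda>x. complex_of_real (\<phi> x)) p"
  unfolding fourier_trunc_def TT_def FT_def cc_def set_lebesgue_integral_def
  by (rule arg_cong[where f="\<lambda>z. _ * z"], rule Bochner_Integration.integral_cong)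
     (auto simp: ek_def indicator_def)

lemma has_L2_fourier_iff:
  "has_L2_fourier \<phi> \<Phi> \<longleftrightarrow> L2c \<Phi> \<and> ((\<lambda>R. DD \<Phi> (TT R (\<lambda>x. complex_of_real (\<phi> x)))) \<longlongrightarrow> 0) at_top"
  unfolding has_L2_fourier_def L2_complex_L2c DD_def fourier_trunc_TT ..

lemma L2c_from_lim:
  assumes g: "L2c g" and Gm: "G \<in> borel_measurable borel"
    and lim: "((\<lambda>R. DD G (TT R g)) \<longlongrightarrow> 0) at_top"
  shows "L2c G"
proof -
  have gm[measurable]: "g \<in> borel_measurable borel" using g by (rule L2c_meas)
  have [measurable]: "G \<in> borel_measurable borel" by (rule Gm)
  have "\<forall>\<^sub>F R in at_top. DD G (TT R g) < 1"
    using order_tendstoD(2)[OF lim] by simp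
  then obtain R where R: "DD G (TT R g) < 1" by (auto simp: eventually_at_top_linorder)
  have t1: "DD G (\<lambda>_. 0) \<le> 2 * DD G (TT R g) + 2 * DD (TT R g) (\<lambda>_. 0)"
    by (rule DD_tri) auto
  have t2: "DD (TT R g) (\<lambda>_. 0) \<le> (\<integral>\<^sup>+x. ennreal ((cmod (g x))\<^sup>2) \<partial>lborel)"
    unfolding DD_def using TT_bessel[OF g] by simp
  have t3: "2 * DD G (TT R g) + 2 * (\<integral>\<^sup>+x. ennreal ((cmod (g x))\<^sup>2) \<partial>lborel) < \<infinity>"
  proof -
    have a1: "DD G (TT R g) < \<top>" using R by (rule order.strict_trans) simp
    have a2: "(\<integral>\<^sup>+x. ennreal ((cmod (g x))\<^sup>2) \<partial>lborel) < \<infinity>" by (rule L2c_nn[OF g])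
    show ?thesis using a1 a2 by (simp add: ennreal_mult_less_top)
  qed
  have t4: "2 * DD G (TT R g) + 2 * DD (TT R g) (\<lambda>_. 0) \<le> 2 * DD G (TT R g) + 2 * (\<integral>\<^sup>+x. ennreal ((cmod (g x))\<^sup>2) \<partial>lborel)"
    by (intro add_left_mono mult_left_mono t2) simp
  have "DD G (\<lambda>_. 0) < \<infinity>"
    by (rule le_less_trans[OF order_trans[OF t1 t4] t3])
  then have "(\<integral>\<^sup>+x. ennreal ((cmod (G x))\<^sup>2) \<partial>lborel) < \<infinity>"
    unfolding DD_def by simp
  then show "L2c G" by (intro L2c_I) auto
qed

lemma refl_nn:
  fixes h :: "real \<Rightarrow> ennreal"
  assumes [measurable]: "h \<in> borel_measurable borel"
  shows "(\<integral>\<^sup>+x. h (-x) \<partial>lborel) = (\<integral>\<^sup>+x. h x \<partial>lborel)"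
  using nn_integral_real_affine[of h "-1" 0] by simp

lemma refl_int:
  fixes h :: "real \<Rightarrow> complex"
  shows "(CLINT x|lborel. h (-x)) = (CLINT x|lborel. h x)"
  using lborel_integral_real_affine[of "-1" h 0] by simp

lemma TT_real_refl: "TT R (\<lambda>x. complex_of_real (\<phi> x)) (-p) = cnj (TT R (\<lambda>x. complex_of_real (\<phi> x)) p)"
proof -
  have "cnj (TT R (\<lambda>x. complex_of_real (\<phi> x)) p)
     = cnj (complex_of_real cc) * cnj (CLINT x|lborel. (indicator {-R..R} x * complex_of_real (\<phi> x)) * ek p x)"
    unfolding TT_def FT_def by (rule complex_cnj_mult)
  also have "\<dots> = complex_of_real cc * (CLINT x|lborel. cnj ((indicator {-R..R} x * complex_of_real (\<phi> x)) * ek p x))"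
    by (simp only: complex_cnj_complex_of_real Bochner_Integration.integral_cnj)
  also have "\<dots> = TT R (\<lambda>x. complex_of_real (\<phi> x)) (-p)"
    unfolding TT_def FT_def by (rule arg_cong[where f="\<lambda>z. _ * z"], rule Bochner_Integration.integral_cong)
      (auto simp: cnj_ek indicator_def)
  finally show ?thesis by simp
qed

lemma gs_L2:
  assumes [measurable]: "h \<in> borel_measurable borel" and b: "\<And>x. cmod (h x) \<le> gs (x + t)"
  shows "L2c h" "integrable lborel h"
proof -
  have gi: "integrable lborel (\<lambda>x. gs (x + t))"
    using lborel_integrable_real_affine[OF gs_integrable, of 1 t] by (simp add: add.commute)
  show "integrable lborel h"
  proof (rule Bochner_Integration.integrable_bound[OF gi])
    show "h \<in> borel_measurable lborel" by simp
    show "AE x in lborel. norm (h x) \<le> norm (gs (x + t))"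
    proof (rule AE_I2)
      fix x show "norm (h x) \<le> norm (gs (x + t))" using b[of x] gs_pos[of "x + t"] by simp
    qed
  qed
  show "L2c h" unfolding L2c_def
  proof
    show "h \<in> borel_measurable borel" by simp
    show "integrable lborel (\<lambda>x. (cmod (h x))\<^sup>2)"
    proof (rule Bochner_Integration.integrable_bound[OF gi])
      show "(\<lambda>x. (cmod (h x))\<^sup>2) \<in> borel_measurable lborel" by measurable
      show "AE x in lborel. norm ((cmod (h x))\<^sup>2) \<le> norm (gs (x + t))"
      proof (rule AE_I2)
        fix x
        have "(cmod (h x))\<^sup>2 \<le> (gs (x + t))\<^sup>2" using b[of x] by (simp add: power_mono)
        also have "\<dots> \<le> gs (x + t)" using gs_le1[of "x + t"] gs_pos[of "x + t"]
          by (simp add: power2_eq_square mult_le_cancel_left1 less_imp_le)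
        finally show "norm ((cmod (h x))\<^sup>2) \<le> norm (gs (x + t))" using gs_pos[of "x+t"] by simp
      qed
    qed
  qed
qed

lemma symb_meas[measurable]: "(\<lambda>p. symb a b p) \<in> borel_measurable borel"
  unfolding symb_def by measurable

lemma symb_cnj: "symb a b (-p) = cnj (symb a b p)"
  unfolding symb_def by (simp add: complex_eq_iff)

lemma symb_lower:
  assumes b: "b \<noteq> 0"
  shows "\<exists>\<delta>>0. \<forall>p. p \<noteq> 0 \<longrightarrow> \<delta> \<le> cmod (symb a b p)"
proof (intro exI[of _ "min 1 (\<bar>b\<bar> * exp (a - 1))"] conjI allI impI)
  show "0 < min 1 (\<bar>b\<bar> * exp (a - 1))" using b by simp
  fix p :: real assume p: "p \<noteq> 0"
  have Re: "Re (symb a b p) = ln (\<bar>p\<bar> / exp a)" unfolding symb_def by simp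
  have Im: "Im (symb a b p) = - (b * p)" unfolding symb_def by simp
  show "min 1 (\<bar>b\<bar> * exp (a - 1)) \<le> cmod (symb a b p)"
  proof (cases "1 \<le> \<bar>ln (\<bar>p\<bar> / exp a)\<bar>")
    case True
    have "1 \<le> cmod (symb a b p)" using True abs_Re_le_cmod[of "symb a b p"] unfolding Re by linarith
    then show ?thesis by linarith
  next
    case False
    then have "-1 < ln (\<bar>p\<bar> / exp a)" by linarith
    then have "exp (-1) < exp (ln (\<bar>p\<bar> / exp a))" by simp
    also have "\<dots> = \<bar>p\<bar> / exp a" using p by simp
    finally have "exp (-1) * exp a < \<bar>p\<bar>" by (simp add: field_simps)
    then have pe: "exp (a - 1) < \<bar>p\<bar>" by (simp add: exp_add[symmetric])
    have "\<bar>b\<bar> * exp (a - 1) \<le> \<bar>b\<bar> * \<bar>p\<bar>" using pe by (intro mult_left_mono) auto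
    also have "\<dots> = \<bar>Im (symb a b p)\<bar>" unfolding Im by (simp add: abs_mult)
    also have "\<dots> \<le> cmod (symb a b p)" by (rule abs_Im_le_cmod)
    finally show ?thesis by linarith
  qed
qed

lemma half_sq: "(cmod ((x + y) / 2))\<^sup>2 \<le> (cmod x)\<^sup>2 + (cmod y)\<^sup>2"
proof -
  have "cmod ((x + y) / 2) \<le> (cmod x + cmod y) / 2"
    using norm_triangle_ineq[of x y] by (simp add: norm_divide)
  then have "(cmod ((x + y) / 2))\<^sup>2 \<le> ((cmod x + cmod y) / 2)\<^sup>2" by (simp add: power_mono)
  also have "\<dots> = ((cmod x)\<^sup>2 + 2 * cmod x * cmod y + (cmod y)\<^sup>2) / 4"
    by (simp add: power2_sum power_divide)
  also have "\<dots> \<le> (cmod x)\<^sup>2 + (cmod y)\<^sup>2"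
  proof -
    have gen: "\<And>A B C::real. C \<le> A + B \<Longrightarrow> 0 \<le> A \<Longrightarrow> 0 \<le> B \<Longrightarrow> (A + C + B) / 4 \<le> A + B"
      by (simp add: field_simps)
    show ?thesis by (rule gen[OF sum_squares_bound[of "cmod x" "cmod y"]]) simp_all
  qed
  finally show ?thesis .
qed

lemma single_exist_F:
  assumes fL: "L2_real f"
  shows "\<exists>F. has_L2_fourier f F \<and> (\<forall>p. F (-p) = cnj (F p))"
proof -
  define fc where "fc = (\<lambda>x. complex_of_real (f x))"
  have fc: "L2c fc" using fL unfolding L2_real_L2c fc_def .
  have fcm[measurable]: "fc \<in> borel_measurable borel" using fc by (rule L2c_meas)
  obtain F0 where F0: "L2c F0" and F0lim: "((\<lambda>R. DD F0 (TT R fc)) \<longlongrightarrow> 0) at_top"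
    using L2_FT_exists[OF fc] by blast
  have F0m[measurable]: "F0 \<in> borel_measurable borel" using F0 by (rule L2c_meas)
  define F where "F p = (F0 p + cnj (F0 (-p))) / 2" for p
  have Fm[measurable]: "F \<in> borel_measurable borel" unfolding F_def[abs_def] by measurable
  have Fherm: "F (-p) = cnj (F p)" for p unfolding F_def by (simp add: add.commute)
  have TTherm: "TT R fc (-p) = cnj (TT R fc p)" for R p unfolding fc_def by (rule TT_real_refl)
  have DDr: "DD (\<lambda>p. cnj (F0 (-p))) (TT R fc) = DD F0 (TT R fc)" for R
  proof -
    have "DD (\<lambda>p. cnj (F0 (-p))) (TT R fc) = (\<integral>\<^sup>+p. ennreal ((cmod (F0 (-p) - TT R fc (-p)))\<^sup>2) \<partial>lborel)"
      unfolding DD_def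
    proof (intro nn_integral_cong)
      fix p
      have "cnj (F0 (-p)) - TT R fc p = cnj (F0 (-p) - TT R fc (-p))" by (simp add: TTherm)
      then show "ennreal ((cmod (cnj (F0 (-p)) - TT R fc p))\<^sup>2) = ennreal ((cmod (F0 (-p) - TT R fc (-p)))\<^sup>2)"
        by (simp only: complex_mod_cnj)
    qed
    also have "\<dots> = DD F0 (TT R fc)" unfolding DD_def
      by (rule refl_nn[of "\<lambda>p. ennreal ((cmod (F0 p - TT R fc p))\<^sup>2)"]) measurable
    finally show ?thesis .
  qed
  have DDF: "DD F (TT R fc) \<le> 2 * DD F0 (TT R fc)" for R
  proof -
    have "DD F (TT R fc) \<le> (\<integral>\<^sup>+p. ennreal ((cmod (F0 p - TT R fc p))\<^sup>2) + ennreal ((cmod (cnj (F0 (-p)) - TT R fc p))\<^sup>2) \<partial>lborel)"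
      unfolding DD_def
    proof (intro nn_integral_mono)
      fix p
      have eq: "F p - TT R fc p = ((F0 p - TT R fc p) + (cnj (F0 (-p)) - TT R fc p)) / 2"
        unfolding F_def by (simp add: field_simps)
      have "(cmod (F p - TT R fc p))\<^sup>2 \<le> (cmod (F0 p - TT R fc p))\<^sup>2 + (cmod (cnj (F0 (-p)) - TT R fc p))\<^sup>2"
        unfolding eq by (rule half_sq)
      then show "ennreal ((cmod (F p - TT R fc p))\<^sup>2) \<le> ennreal ((cmod (F0 p - TT R fc p))\<^sup>2) + ennreal ((cmod (cnj (F0 (-p)) - TT R fc p))\<^sup>2)"
        by (simp add: ennreal_plus[symmetric] del: ennreal_plus)
    qed
    also have "\<dots> = DD F0 (TT R fc) + DD (\<lambda>p. cnj (F0 (-p))) (TT R fc)"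
      unfolding DD_def by (rule nn_integral_add) measurable
    also have "\<dots> = 2 * DD F0 (TT R fc)" by (simp add: DDr mult_2)
    finally show ?thesis .
  qed
  have Flim: "((\<lambda>R. DD F (TT R fc)) \<longlongrightarrow> 0) at_top"
  proof (rule tendsto_sandwich[of "\<lambda>_. 0" _ _ "\<lambda>R. 2 * DD F0 (TT R fc)"])
    show "((\<lambda>R. 2 * DD F0 (TT R fc)) \<longlongrightarrow> 0) at_top"
      using ennreal_tendsto_cmult[OF _ F0lim, of 2] by simp
  qed (auto simp: DDF)
  have FL2: "L2c F" by (rule L2c_from_lim[OF fc Fm Flim])
  have "has_L2_fourier f F" unfolding has_L2_fourier_iff using FL2 Flim unfolding fc_def by simp
  then show ?thesis using Fherm by blast
qed

lemma kmod_L2: "L2c (\<lambda>p. complex_of_real (gs p) * ek t p)" "integrable lborel (\<lambda>p. complex_of_real (gs p) * ek t p)"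
  by (rule gs_L2[where t=0], measurable, simp add: norm_mult gs_pos less_imp_le)+

lemma kshift_L2: "L2c (\<lambda>x. complex_of_real (gs (x + s)))" "integrable lborel (\<lambda>x. complex_of_real (gs (x + s)))"
  by (rule gs_L2[where t=s], measurable, simp add: gs_pos less_imp_le)+

lemma FT_kmod: "FT (\<lambda>p. complex_of_real (gs p) * ek t p) = (\<lambda>x. complex_of_real (gs (x + t)))"
  by (rule ext) (rule gs_FT_mod)

lemma FT_kshift: "FT (\<lambda>x. complex_of_real (gs (x + s))) = (\<lambda>p. complex_of_real (gs p) * ek (-s) p)"
  by (rule ext) (rule gs_FT_shift)

lemma has_L2_fourier_L2c: "has_L2_fourier f F \<Longrightarrow> L2c F"
  unfolding has_L2_fourier_iff by simp

lemma has_L2_fourier_lim: "has_L2_fourier f F \<Longrightarrow> ((\<lambda>R. DD F (TT R (\<lambda>x. complex_of_real (f x)))) \<longlongrightarrow> 0) at_top"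
  unfolding has_L2_fourier_iff by simp

lemma pair_real:
  assumes fL: "L2_real f" and hF: "has_L2_fourier f F"
    and ki: "integrable lborel k" and k2: "L2c k" and Fk: "L2c (FT k)"
  shows "(CLINT p|lborel. F p * k p) = (CLINT x|lborel. complex_of_real (f x) * FT k x)"
  using pairing[OF fL[unfolded L2_real_L2c] has_L2_fourier_L2c[OF hF] has_L2_fourier_lim[OF hF] ki k2 Fk] .

lemma uniq_from_pairing:
  assumes v: "L2_real v" and u: "L2_real u"
    and eq: "\<And>s. (CLINT x|lborel. complex_of_real (v x) * (complex_of_real (gs x) * ek (-s) x))
                  = (CLINT x|lborel. complex_of_real (u x) * (complex_of_real (gs x) * ek (-s) x))"
  shows "AE x in lborel. v x = u x"
proof -
  have vc: "L2c (\<lambda>x. complex_of_real (v x))" using v unfolding L2_real_L2c .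
  have uc: "L2c (\<lambda>x. complex_of_real (u x))" using u unfolding L2_real_L2c .
  have d: "L2c (\<lambda>x. complex_of_real (v x) - complex_of_real (u x))" by (rule L2c_diff[OF vc uc])
  have g0: "L2c (\<lambda>x. complex_of_real (gs (x + 0)))" by (rule kshift_L2)
  have hi: "integrable lborel (\<lambda>x. (complex_of_real (v x) - complex_of_real (u x)) * complex_of_real (gs (x + 0)))"
    by (rule prod_L1[OF d g0])
  have "AE x in lborel. (complex_of_real (v x) - complex_of_real (u x)) * complex_of_real (gs (x + 0)) = 0"
  proof (rule UQ[OF hi])
    fix t
    have i1: "integrable lborel (\<lambda>x. complex_of_real (v x) * (complex_of_real (gs x) * ek (-t) x))"
      by (rule prod_L1[OF vc kmod_L2(1)])
    have i2: "integrable lborel (\<lambda>x. complex_of_real (u x) * (complex_of_real (gs x) * ek (-t) x))"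
      by (rule prod_L1[OF uc kmod_L2(1)])
    have "(CLINT x|lborel. (complex_of_real (v x) - complex_of_real (u x)) * complex_of_real (gs (x + 0)) * iexp (t * x))
      = (CLINT x|lborel. complex_of_real (v x) * (complex_of_real (gs x) * ek (-t) x) - complex_of_real (u x) * (complex_of_real (gs x) * ek (-t) x))"
      by (rule Bochner_Integration.integral_cong) (simp_all add: ek_def algebra_simps)
    also have "\<dots> = 0" by (simp add: Bochner_Integration.integral_diff[OF i1 i2] eq)
    finally show "(CLINT x|lborel. (complex_of_real (v x) - complex_of_real (u x)) * complex_of_real (gs (x + 0)) * iexp (t * x)) = 0" .
  qed
  then show ?thesis
  proof eventually_elim
    case (elim x) then show ?case using gs_pos[of x] by simp
  qed
qed

lemma single:
  fixes a b :: real and f :: "real \<Rightarrow> real"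
  assumes b: "b \<noteq> 0" and fL: "L2_real f"
  shows "\<exists>u. solves_eq a b f u \<and> (\<forall>v. solves_eq a b f v \<longrightarrow> (AE x in lborel. v x = u x))"
proof -
  obtain F where hF: "has_L2_fourier f F" and Fherm: "\<And>p. F (-p) = cnj (F p)"
    using single_exist_F[OF fL] by blast
  have FL2: "L2c F" by (rule has_L2_fourier_L2c[OF hF])
  have Fm[measurable]: "F \<in> borel_measurable borel" using FL2 by (rule L2c_meas)
  obtain \<delta> where \<delta>: "\<delta> > 0" and \<delta>b: "\<And>p. p \<noteq> 0 \<Longrightarrow> \<delta> \<le> cmod (symb a b p)"
    using symb_lower[OF b, of a] by blast
  define U where "U p = (if p = 0 then 0 else F p / symb a b p)" for p
  have Um[measurable]: "U \<in> borel_measurable borel" unfolding U_def[abs_def] by measurable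
  have Uherm: "U (-p) = cnj (U p)" for p
    unfolding U_def by (simp add: Fherm symb_cnj complex_cnj_divide)
  have Ub: "cmod (U p) \<le> cmod (F p) / \<delta>" for p
  proof (cases "p = 0")
    case True then show ?thesis using \<delta> by (simp add: U_def)
  next
    case False
    have "cmod (U p) = cmod (F p) / cmod (symb a b p)" using False by (simp add: U_def norm_divide)
    also have "\<dots> \<le> cmod (F p) / \<delta>" using \<delta> \<delta>b[OF False] by (intro divide_left_mono) (auto intro!: mult_pos_pos)
    finally show ?thesis .
  qed
  have UL2: "L2c U"
  proof (rule L2c_I)
    show "U \<in> borel_measurable borel" by simp
    have "(\<integral>\<^sup>+p. ennreal ((cmod (U p))\<^sup>2) \<partial>lborel) \<le> (\<integral>\<^sup>+p. ennreal (1 / \<delta>\<^sup>2) * ennreal ((cmod (F p))\<^sup>2) \<partial>lborel)"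
    proof (intro nn_integral_mono)
      fix p
      have "(cmod (U p))\<^sup>2 \<le> (cmod (F p) / \<delta>)\<^sup>2" using Ub[of p] by (simp add: power_mono)
      also have "\<dots> = 1 / \<delta>\<^sup>2 * (cmod (F p))\<^sup>2" by (simp add: power_divide)
      finally show "ennreal ((cmod (U p))\<^sup>2) \<le> ennreal (1 / \<delta>\<^sup>2) * ennreal ((cmod (F p))\<^sup>2)"
        by (simp add: ennreal_mult[symmetric])
    qed
    also have "\<dots> = ennreal (1 / \<delta>\<^sup>2) * (\<integral>\<^sup>+p. ennreal ((cmod (F p))\<^sup>2) \<partial>lborel)"
      by (rule nn_integral_cmult) measurable
    also have "\<dots> < \<infinity>" using L2c_nn[OF FL2] by (simp add: ennreal_mult_less_top)
    finally show "(\<integral>\<^sup>+p. ennreal ((cmod (U p))\<^sup>2) \<partial>lborel) < \<infinity>" .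
  qed
  have Usymb: "AE p in lborel. symb a b p * U p = F p"
    using AE_lborel_singleton[of 0]
  proof eventually_elim
    case (elim p)
    have "symb a b p \<noteq> 0" using \<delta>b[OF elim] \<delta> by auto
    then show ?case using elim by (simp add: U_def)
  qed
  define UC where "UC p = cnj (U p)" for p
  have UCL2: "L2c UC"
  proof (rule L2c_I)
    show "UC \<in> borel_measurable borel" unfolding UC_def[abs_def] by measurable
    show "(\<integral>\<^sup>+p. ennreal ((cmod (UC p))\<^sup>2) \<partial>lborel) < \<infinity>" unfolding UC_def using L2c_nn[OF UL2] by simp
  qed
  obtain V0 where V0: "L2c V0" and V0lim: "((\<lambda>R. DD V0 (TT R UC)) \<longlongrightarrow> 0) at_top"
    using L2_FT_exists[OF UCL2] by blast
  have V0m[measurable]: "V0 \<in> borel_measurable borel" using V0 by (rule L2c_meas)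
  define u where "u x = Re (V0 x)" for x
  have uL: "L2_real u" unfolding L2_real_L2c
  proof (rule L2c_I)
    show "(\<lambda>x. complex_of_real (u x)) \<in> borel_measurable borel" unfolding u_def by measurable
    have "(\<integral>\<^sup>+x. ennreal ((cmod (complex_of_real (u x)))\<^sup>2) \<partial>lborel) \<le> (\<integral>\<^sup>+x. ennreal ((cmod (V0 x))\<^sup>2) \<partial>lborel)"
    proof (intro nn_integral_mono ennreal_leI)
      fix x
      have "\<bar>Re (V0 x)\<bar> \<le> cmod (V0 x)" by (rule abs_Re_le_cmod)
      then have "\<bar>Re (V0 x)\<bar>\<^sup>2 \<le> (cmod (V0 x))\<^sup>2" by (rule power_mono) simp
      then show "(cmod (complex_of_real (u x)))\<^sup>2 \<le> (cmod (V0 x))\<^sup>2"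
        unfolding u_def by simp
    qed
    also have "\<dots> < \<infinity>" by (rule L2c_nn[OF V0])
    finally show "(\<integral>\<^sup>+x. ennreal ((cmod (complex_of_real (u x)))\<^sup>2) \<partial>lborel) < \<infinity>" .
  qed
  define uc where "uc = (\<lambda>x. complex_of_real (u x))"
  have ucL2: "L2c uc" using uL unfolding L2_real_L2c uc_def .
  obtain Uh where Uh: "L2c Uh" and Uhlim: "((\<lambda>R. DD Uh (TT R uc)) \<longlongrightarrow> 0) at_top"
    using L2_FT_exists[OF ucL2] by blast
  have Uhm[measurable]: "Uh \<in> borel_measurable borel" using Uh by (rule L2c_meas)
  define k where "k t p = complex_of_real (gs p) * ek (-t) p" for t p
  have key: "(CLINT p|lborel. Uh p * k t p) = (CLINT p|lborel. U p * k t p)" for t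
  proof -
    define z where "z = (CLINT p|lborel. U p * k t p)"
    have kL2: "L2c (k t)" and ki: "integrable lborel (k t)" unfolding k_def by (rule kmod_L2)+
    have Fk: "FT (k t) = (\<lambda>x. complex_of_real (gs (x + -t)))" unfolding k_def by (rule FT_kmod)
    have FkL2: "L2c (FT (k t))" unfolding Fk by (rule kshift_L2)
    define k2 where "k2 x = complex_of_real (gs (x + -t))" for x
    have k2L2: "L2c k2" and k2i: "integrable lborel k2" unfolding k2_def[abs_def] by (rule kshift_L2)+
    have Fk2: "FT k2 = (\<lambda>p. complex_of_real (gs p) * ek (- (-t)) p)" unfolding k2_def[abs_def] by (rule FT_kshift)
    have Fk2L2: "L2c (FT k2)" unfolding Fk2 by (rule kmod_L2)
    have "(CLINT p|lborel. Uh p * k t p) = (CLINT x|lborel. uc x * FT (k t) x)"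
      by (rule pairing[OF ucL2 Uh Uhlim ki kL2 FkL2])
    also have "\<dots> = (CLINT x|lborel. complex_of_real (Re (V0 x * k2 x)))"
      unfolding Fk uc_def u_def k2_def by (rule Bochner_Integration.integral_cong) simp_all
    also have "\<dots> = complex_of_real (LINT x|lborel. Re (V0 x * k2 x))"
      by (rule integral_complex_of_real)
    also have "(LINT x|lborel. Re (V0 x * k2 x)) = Re (CLINT x|lborel. V0 x * k2 x)"
      by (rule integral_Re[OF prod_L1[OF V0 k2L2]])
    also have "(CLINT x|lborel. V0 x * k2 x) = (CLINT p|lborel. UC p * FT k2 p)"
      by (rule pairing[OF UCL2 V0 V0lim k2i k2L2 Fk2L2])
    also have "\<dots> = (CLINT p|lborel. cnj (U p * k t p))"
      unfolding Fk2 UC_def k_def by (rule Bochner_Integration.integral_cong) (simp_all add: cnj_ek)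
    also have "\<dots> = cnj z" unfolding z_def by (rule Bochner_Integration.integral_cnj)
    finally have e1: "(CLINT p|lborel. Uh p * k t p) = complex_of_real (Re (cnj z))" .
    have "cnj z = (CLINT p|lborel. cnj (U p * k t p))" unfolding z_def by (rule Bochner_Integration.integral_cnj[symmetric])
    also have "\<dots> = (CLINT p|lborel. U (-p) * k t (-p))"
    proof (rule Bochner_Integration.integral_cong)
      fix p
      have "ek (-t) (-p) = ek t p" unfolding ek_def by simp
      then show "cnj (U p * k t p) = U (-p) * k t (-p)"
        unfolding k_def by (simp add: Uherm gs_even cnj_ek)
    qed simp
    also have "\<dots> = z" unfolding z_def by (rule refl_int[of "\<lambda>p. U p * k t p"])
    finally have "cnj z = z" .
    then have "Im z = 0" by (simp add: complex_eq_iff)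
    then have "complex_of_real (Re (cnj z)) = z" by (simp add: complex_eq_iff)
    with e1 show ?thesis unfolding z_def by simp
  qed
  have UhU: "AE p in lborel. Uh p = U p"
  proof -
    have d: "L2c (\<lambda>p. Uh p - U p)" by (rule L2c_diff[OF Uh UL2])
    have hi: "integrable lborel (\<lambda>p. (Uh p - U p) * complex_of_real (gs (p + 0)))"
      by (rule prod_L1[OF d kshift_L2(1)])
    have "AE p in lborel. (Uh p - U p) * complex_of_real (gs (p + 0)) = 0"
    proof (rule UQ[OF hi])
      fix t
      have kL2: "L2c (k t)" unfolding k_def by (rule kmod_L2)
      have i1: "integrable lborel (\<lambda>p. Uh p * k t p)" by (rule prod_L1[OF Uh kL2])
      have i2: "integrable lborel (\<lambda>p. U p * k t p)" by (rule prod_L1[OF UL2 kL2])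
      have "(CLINT p|lborel. (Uh p - U p) * complex_of_real (gs (p + 0)) * iexp (t * p))
        = (CLINT p|lborel. Uh p * k t p - U p * k t p)"
        unfolding k_def by (rule Bochner_Integration.integral_cong) (simp_all add: ek_def algebra_simps)
      also have "\<dots> = 0" by (simp add: Bochner_Integration.integral_diff[OF i1 i2] key)
      finally show "(CLINT p|lborel. (Uh p - U p) * complex_of_real (gs (p + 0)) * iexp (t * p)) = 0" .
    qed
    then show ?thesis
    proof eventually_elim
      case (elim p) then show ?case using gs_pos[of p] by simp
    qed
  qed
  have hU: "has_L2_fourier u U"
  proof -
    have "DD U (TT R uc) = DD Uh (TT R uc)" for R
      unfolding DD_def by (rule nn_integral_cong_AE) (use UhU in \<open>eventually_elim, simp\<close>)
    then have "((\<lambda>R. DD U (TT R uc)) \<longlongrightarrow> 0) at_top" using Uhlim by simp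
    then show ?thesis unfolding has_L2_fourier_iff using UL2 unfolding uc_def by simp
  qed
  have sol: "solves_eq a b f u"
    unfolding solves_eq_def using uL hU hF Usymb by blast
  have uniq: "AE x in lborel. v x = u x" if sv: "solves_eq a b f v" for v
  proof -
    obtain V F2 where vL: "L2_real v" and hV: "has_L2_fourier v V" and hF2: "has_L2_fourier f F2"
      and sym2: "AE p in lborel. symb a b p * V p = F2 p"
      using sv unfolding solves_eq_def by blast
    have fcm[measurable]: "(\<lambda>x. complex_of_real (f x)) \<in> borel_measurable borel"
      using fL unfolding L2_real_L2c by (rule L2c_meas)
    have F2m[measurable]: "F2 \<in> borel_measurable borel" using has_L2_fourier_L2c[OF hF2] by (rule L2c_meas)
    have F2F: "AE p in lborel. F2 p = F p"
      by (rule L2lim_unique[OF F2m Fm _ has_L2_fourier_lim[OF hF2] has_L2_fourier_lim[OF hF]]) simp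
    have VU: "AE p in lborel. V p = U p"
      using sym2 F2F AE_lborel_singleton[of 0]
    proof eventually_elim
      case (elim p)
      have "symb a b p \<noteq> 0" using \<delta>b[OF elim(3)] \<delta> by auto
      then show ?case using elim by (simp add: U_def field_simps)
    qed
    show ?thesis
    proof (rule uniq_from_pairing[OF vL uL])
      fix s
      define k3 where "k3 p = complex_of_real (gs (p + s))" for p
      have k3L2: "L2c k3" and k3i: "integrable lborel k3" unfolding k3_def[abs_def] by (rule kshift_L2)+
      have Fk3: "FT k3 = (\<lambda>p. complex_of_real (gs p) * ek (-s) p)" unfolding k3_def[abs_def] by (rule FT_kshift)
      have Fk3L2: "L2c (FT k3)" unfolding Fk3 by (rule kmod_L2)
      have Vm[measurable]: "V \<in> borel_measurable borel" using has_L2_fourier_L2c[OF hV] by (rule L2c_meas)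
      have k3m[measurable]: "k3 \<in> borel_measurable borel" using k3L2 by (rule L2c_meas)
      have "(CLINT x|lborel. complex_of_real (v x) * (complex_of_real (gs x) * ek (-s) x))
          = (CLINT p|lborel. V p * k3 p)"
        using pair_real[OF vL hV k3i k3L2 Fk3L2] unfolding Fk3 by simp
      also have "\<dots> = (CLINT p|lborel. U p * k3 p)"
        apply (rule integral_cong_AE)
        subgoal by measurable
        subgoal by measurable
        subgoal using VU by (auto elim: eventually_mono)
        done
      also have "\<dots> = (CLINT x|lborel. complex_of_real (u x) * (complex_of_real (gs x) * ek (-s) x))"
        using pair_real[OF uL hU k3i k3L2 Fk3L2] unfolding Fk3 by simp
      finally show "(CLINT x|lborel. complex_of_real (v x) * (complex_of_real (gs x) * ek (-s) x))
          = (CLINT x|lborel. complex_of_real (u x) * (complex_of_real (gs x) * ek (-s) x))" .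
    qed
  qed
  show ?thesis using sol uniq by blast
qed

theorem lemma5:
  fixes N :: nat and a b :: "nat \<Rightarrow> real" and f :: "nat \<Rightarrow> real \<Rightarrow> real"
  assumes "N \<ge> 1"
    and "\<forall>m\<in>{1..N}. b m \<noteq> 0"
    and "\<forall>m\<in>{1..N}. L2_real (f m)"
    and "\<exists>m\<in>{1..N}. \<exists>x. f m x \<noteq> 0"
  shows "\<exists>u :: nat \<Rightarrow> real \<Rightarrow> real.
           (\<forall>m\<in>{1..N}. solves_eq (a m) (b m) (f m) (u m)) \<and>
           (\<forall>v :: nat \<Rightarrow> real \<Rightarrow> real.
              (\<forall>m\<in>{1..N}. solves_eq (a m) (b m) (f m) (v m)) \<longrightarrow>
              (\<forall>m\<in>{1..N}. AE x in lborel. v m x = u m x))"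
proof -
  have "\<forall>m\<in>{1..N}. \<exists>w. solves_eq (a m) (b m) (f m) w \<and>
          (\<forall>v. solves_eq (a m) (b m) (f m) v \<longrightarrow> (AE x in lborel. v x = w x))"
    using assms(2,3) single by blast
  then obtain U where U: "\<forall>m\<in>{1..N}. solves_eq (a m) (b m) (f m) (U m) \<and>
          (\<forall>v. solves_eq (a m) (b m) (f m) v \<longrightarrow> (AE x in lborel. v x = U m x))"
    by (rule bchoice[elim_format]) blast
  show ?thesis
  proof (intro exI[of _ U] conjI allI impI ballI)
    fix m assume "m \<in> {1..N}"
    then show "solves_eq (a m) (b m) (f m) (U m)" using U by blast
  next
    fix v m assume "\<forall>m\<in>{1..N}. solves_eq (a m) (b m) (f m) (v m)" "m \<in> {1..N}"
    then show "AE x in lborel. v m x = U m x" using U by blast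
  qed
qed

end
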